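(* Let $\mathcal H$ be a (finite) higraph with path DGA $(\mathcal A,\delta)$, map $\partial$ and pairing $\langle\cdot,\cdot\rangle$ as in the context. Then $\langle\partial a,b\rangle=\langle a,\delta b\rangle$ for all $a,b\in\mathcal A$. Furthermore $\partial^2=0$ and $\delta^2=0$.
   Context: $\mathbb F=\{0,1\}$. A directed hypergraph $\mathcal H=(\mathcal V,\mathcal E)$ has edges $\varepsilon=(I,J)\in2^{\mathcal V}\times2^{\mathcal V}$, source $I$, target $J$. It is a higraph if for all edges $\varepsilon,\varepsilon'$: (Transitive) if $t(\varepsilon)\cap s(\varepsilon')\ne\emptyset$ then it equals $\{K\}$ for one vertex $K$, the unions $s(\varepsilon)\cup(s(\varepsilon')\setminus\{K\})$ and $(t(\varepsilon)\setminus\{K\})\cup t(\varepsilon')$ are disjoint unions and their pair is an edge; (Acyclic) if $t(\varepsilon)\cap s(\varepsilon')$ and $t(\varepsilon')\cap s(\varepsilon)$ are both non-empty then $\varepsilon=\varepsilon'=(\{K\},\{K\})$. $\mathcal V$ is finite. A path is a non-empty finite directed tree $T=(V,E)$ (nodes; arrows, called breaks) with $\rho:V\to\mathcal E$ such that for each arrow $e$, $t(\rho(s(e)))\cap s(\rho(t(e)))$ is a single vertex $\rho(e)$, and distinct arrows with a common source node or common target node have distinct $\rho(e)$; label-compatible tree isomorphisms identify paths. Length = number of nodes. Source $s(\rho)=\bigcup_v(s(\rho(v))\setminus\{\rho(e):t(e)=v\})$, target $t(\rho)=\bigcup_v(t(\rho(v))\setminus\{\rho(e):s(e)=v\})$;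 a vertex of $s(\rho)$ in $s(\rho(v))$ is sourced by $v$, a vertex of $t(\rho)$ in $t(\rho(v))$ is targeted by $v$. Gluing $q(\rho,e)$ at a break $e$: contract the arrow $e$ to a node $v^*$, keep other labels, and set $\rho(v^* )=(s(\rho'),t(\rho'))$ with $\rho'$ the subpath on the endpoints of $e$. Refinement $r((\rho,v),\rho'')$ for a node $v$ and a path $\rho''$ with $s(\rho'')=s(\rho(v))$, $t(\rho'')=t(\rho(v))$: replace $v$ by the tree of $\rho''$, each arrow $(a,v)$ by $(a,v'')$ with $v''$ the node of $\rho''$ sourcing $\rho((a,v))$, each arrow $(v,b)$ by $(v'',b)$ with $v''$ targeting $\rho((v,b))$; it is $0$ if $\rho''$ is not compatible. Path DGA: $\mathcal A$ is the $\mathbb F$-vector space with basis the paths, graded by length; product $\rho_1\rho_2$ is the concatenation (disjoint union of trees plus the arrow from the node of $\rho_1$ targeting $K$ to the node of $\rho_2$ sourcing $K$) when $t(\rho_1)\cap s(\rho_2)=\{K\}$, and $0$ if this intersection is empty. $\delta\rho=\sum_{v\in V}\sum_{\rho''\text{ of length }2}r((\rho,v),\rho'')$ and $\partial\rho=\sum_{e\in E}q(\rho,e)$, extended linearly. $\langle\rho_1,\rho_2\rangle=1$ if $\rho_1=\rho_2$, $0$ otherwise, extended bilinearly. *)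

theory Defs
  imports Main
begin

type_synonym 'v hedge = "'v set \<times> 'v set"

text \<open>A directed hypergraph on the finite vertex type 'v is given by its edge set E;
  fst = source, snd = target.\<close>

definition is_higraph :: "'v hedge set \<Rightarrow> bool" where
  "is_higraph E \<longleftrightarrow>
     (\<forall>\<epsilon>\<in>E. \<forall>\<epsilon>'\<in>E. snd \<epsilon> \<inter> fst \<epsilon>' \<noteq> {} \<longrightarrow>
        (\<exists>K. snd \<epsilon> \<inter> fst \<epsilon>' = {K}
           \<and> fst \<epsilon> \<inter> (fst \<epsilon>' - {K}) = {}
           \<and> (snd \<epsilon> - {K}) \<inter> snd \<epsilon>' = {}
           \<and> (fst \<epsilon> \<union> (fst \<epsilon>' - {K}), (snd \<epsilon> - {K}) \<union> snd \<epsilon>') \<in> E))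
   \<and> (\<forall>\<epsilon>\<in>E. \<forall>\<epsilon>'\<in>E. snd \<epsilon> \<inter> fst \<epsilon>' \<noteq> {} \<and> snd \<epsilon>' \<inter> fst \<epsilon> \<noteq> {} \<longrightarrow>
        (\<exists>K. \<epsilon> = ({K}, {K}) \<and> \<epsilon>' = ({K}, {K})))"

record 'v ptree =
  nodes :: "nat set"
  arrs  :: "(nat \<times> nat) set"
  lab   :: "nat \<Rightarrow> 'v hedge"

definition is_dtree :: "'v ptree \<Rightarrow> bool" where
  "is_dtree T \<longleftrightarrow> finite (nodes T) \<and> nodes T \<noteq> {} \<and> arrs T \<subseteq> nodes T \<times> nodes T
     \<and> (\<forall>x. (x, x) \<notin> arrs T)
     \<and> (\<forall>x\<in>nodes T. \<forall>y\<in>nodes T. (x, y) \<in> (arrs T \<union> (arrs T)\<inverse>)\<^sup>*)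
     \<and> card (arrs T) + 1 = card (nodes T)"

definition alab :: "'v ptree \<Rightarrow> nat \<times> nat \<Rightarrow> 'v" where
  "alab T e = the_elem (snd (lab T (fst e)) \<inter> fst (lab T (snd e)))"

definition is_path :: "'v hedge set \<Rightarrow> 'v ptree \<Rightarrow> bool" where
  "is_path E T \<longleftrightarrow> is_dtree T
     \<and> (\<forall>x\<in>nodes T. lab T x \<in> E)
     \<and> (\<forall>e\<in>arrs T. \<exists>K. snd (lab T (fst e)) \<inter> fst (lab T (snd e)) = {K})
     \<and> (\<forall>e\<in>arrs T. \<forall>e'\<in>arrs T. e \<noteq> e' \<and> (fst e = fst e' \<or> snd e = snd e')
            \<longrightarrow> alab T e \<noteq> alab T e')"

definition psrc :: "'v ptree \<Rightarrow> 'v set" where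
  "psrc T = (\<Union>x\<in>nodes T. fst (lab T x) - {alab T e | e. e \<in> arrs T \<and> snd e = x})"

definition ptgt :: "'v ptree \<Rightarrow> 'v set" where
  "ptgt T = (\<Union>x\<in>nodes T. snd (lab T x) - {alab T e | e. e \<in> arrs T \<and> fst e = x})"

definition ptree_iso :: "'v ptree \<Rightarrow> 'v ptree \<Rightarrow> bool" where
  "ptree_iso T T' \<longleftrightarrow> (\<exists>f. bij_betw f (nodes T) (nodes T')
      \<and> arrs T' = (\<lambda>(a, b). (f a, f b)) ` arrs T
      \<and> (\<forall>x\<in>nodes T. lab T' (f x) = lab T x))"

text \<open>A path (basis element of the path DGA) is an isomorphism class of concrete paths.\<close>
definition cls :: "'v ptree \<Rightarrow> 'v ptree set" where
  "cls T = {T'. ptree_iso T T'}"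

definition paths :: "'v hedge set \<Rightarrow> 'v ptree set set" where
  "paths E = {cls T | T. is_path E T}"

definition rep :: "'v ptree set \<Rightarrow> 'v ptree" where
  "rep C = (SOME T. T \<in> C)"

text \<open>Elements of the F-vector space A (F = {0,1}): finite sets of basis paths
  (coefficient 1 exactly on the members); addition is symmetric difference.\<close>
definition pathDGA :: "'v hedge set \<Rightarrow> 'v ptree set set set" where
  "pathDGA E = {a. finite a \<and> a \<subseteq> paths E}"

text \<open>F-linear combination (sum over a finite index family) of concrete trees.\<close>
definition f2sum :: "('i \<Rightarrow> 'v ptree) \<Rightarrow> 'i set \<Rightarrow> 'v ptree set set" where
  "f2sum g I = {C. odd (card {i\<in>I. cls (g i) = C})}"

text \<open>Linear extension of a map defined on basis paths.\<close>
definition lin :: "('v ptree set \<Rightarrow> 'v ptree set set) \<Rightarrow> 'v ptree set set \<Rightarrow> 'v ptree set set" where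
  "lin F a = {C. odd (card {D\<in>a. C \<in> F D})}"

definition glue :: "'v ptree \<Rightarrow> nat \<times> nat \<Rightarrow> 'v ptree" where
  "glue T e = (let a = fst e; b = snd e; K = alab T e; ren = (\<lambda>z. if z = b then a else z) in
     \<lparr> nodes = nodes T - {b},
       arrs = (\<lambda>(x, y). (ren x, ren y)) ` (arrs T - {e}),
       lab = (lab T)(a := (fst (lab T a) \<union> (fst (lab T b) - {K}),
                           (snd (lab T a) - {K}) \<union> snd (lab T b))) \<rparr>)"

text \<open>The length-2 path x -> y with labels e1, e2 (every length-2 path is isomorphic
  to exactly one of these).\<close>
definition len2 :: "'v hedge \<Rightarrow> 'v hedge \<Rightarrow> 'v ptree" where
  "len2 e1 e2 = \<lparr> nodes = {0, 1}, arrs = {(0, 1)}, lab = (\<lambda>n. if n = 0 then e1 else e2) \<rparr>"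

text \<open>Replace node v by the length-2 path len2 e1 e2 (node v plays the role of its first
  node, a fresh node y its second node).\<close>
definition refine :: "'v ptree \<Rightarrow> nat \<Rightarrow> 'v hedge \<Rightarrow> 'v hedge \<Rightarrow> 'v ptree" where
  "refine T v e1 e2 = (let y = Suc (Max (nodes T)) in
     \<lparr> nodes = insert y (nodes T),
       arrs = {e \<in> arrs T. fst e \<noteq> v \<and> snd e \<noteq> v} \<union> {(v, y)}
              \<union> {(a, if alab T (a, v) \<in> fst e1 then v else y) | a. (a, v) \<in> arrs T}
              \<union> {(if alab T (v, b) \<in> snd e2 then y else v, b) | b. (v, b) \<in> arrs T},
       lab = (lab T)(v := e1, y := e2) \<rparr>)"

text \<open>Index set of the non-zero terms r((rho,v),rho'') of delta rho: length-2 paths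
  rho'' with the same source and target as rho(v), for which the refinement is a path.\<close>
definition refine_terms :: "'v hedge set \<Rightarrow> 'v ptree \<Rightarrow> (nat \<times> 'v hedge \<times> 'v hedge) set" where
  "refine_terms E T = {(v, e1, e2). v \<in> nodes T \<and> is_path E (len2 e1 e2)
      \<and> psrc (len2 e1 e2) = fst (lab T v) \<and> ptgt (len2 e1 e2) = snd (lab T v)
      \<and> is_path E (refine T v e1 e2)}"

definition bdry_tree :: "'v ptree \<Rightarrow> 'v ptree set set" where
  "bdry_tree T = f2sum (glue T) (arrs T)"

definition delta_tree :: "'v hedge set \<Rightarrow> 'v ptree \<Rightarrow> 'v ptree set set" where
  "delta_tree E T = f2sum (\<lambda>(v, e1, e2). refine T v e1 e2) (refine_terms E T)"

definition bdry :: "'v ptree set set \<Rightarrow> 'v ptree set set" where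
  "bdry a = lin (\<lambda>C. bdry_tree (rep C)) a"

definition delta :: "'v hedge set \<Rightarrow> 'v ptree set set \<Rightarrow> 'v ptree set set" where
  "delta E a = lin (\<lambda>C. delta_tree E (rep C)) a"

text \<open>Pairing with values in F = {0,1}, encoded as bool (True = 1).\<close>
definition pairing :: "'v ptree set set \<Rightarrow> 'v ptree set set \<Rightarrow> bool" where
  "pairing a b = odd (card (a \<inter> b))"

end

theory Submission
  imports Defs "HOL-Combinatorics.Cycles" "HOL-Computational_Algebra.Primes"
begin


section \<open>Parity counting\<close>

lemma odd_sum_card:
  fixes f :: "'a \<Rightarrow> nat"
  assumes "finite A"
  shows "odd (sum f A) \<longleftrightarrow> odd (card {x\<in>A. odd (f x)})"
  using assms
proof (induction A rule: finite_induct)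
  case empty then show ?case by simp
next
  case (insert a A)
  have fa: "finite {x\<in>A. odd (f x)}" using insert by simp
  have na: "a \<notin> {x\<in>A. odd (f x)}" using insert by simp
  show ?case
  proof (cases "odd (f a)")
    case True
    then have e: "{x \<in> insert a A. odd (f x)} = insert a {x\<in>A. odd (f x)}" by auto
    show ?thesis unfolding e using insert True fa na by simp
  next
    case False
    then have e: "{x \<in> insert a A. odd (f x)} = {x\<in>A. odd (f x)}" by auto
    show ?thesis unfolding e using insert False by simp
  qed
qed

lemma card_filter_sum: "finite B \<Longrightarrow> card {y\<in>B. P y} = (\<Sum>y\<in>B. if P y then 1 else 0)"
  by (simp add: sum.If_cases Int_def conj_commute)

lemma sum_card_swap:
  assumes "finite A" "finite B"
  shows "(\<Sum>x\<in>A. card {y\<in>B. R x y}) = (\<Sum>y\<in>B. card {x\<in>A. R x y})"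
proof -
  have "(\<Sum>x\<in>A. card {y\<in>B. R x y}) = (\<Sum>x\<in>A. \<Sum>y\<in>B. if R x y then 1 else 0)"
    using assms by (simp add: card_filter_sum)
  also have "\<dots> = (\<Sum>y\<in>B. \<Sum>x\<in>A. if R x y then 1 else 0)"
    by (rule sum.swap)
  also have "\<dots> = (\<Sum>y\<in>B. card {x\<in>A. R x y})"
    using assms by (simp add: card_filter_sum)
  finally show ?thesis .
qed

lemma card_fibres:
  assumes "finite I"
  shows "card {i\<in>I. P (h i)} = (\<Sum>C\<in>{C\<in>h ` I. P C}. card {i\<in>I. h i = C})"
proof -
  let ?S = "{i\<in>I. P (h i)}" and ?T = "{C\<in>h ` I. P C}"
  have fS: "finite ?S" and fT: "finite ?T" using assms by auto
  have sub: "h ` ?S \<subseteq> ?T" by auto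
  have "(\<Sum>C\<in>?T. sum (\<lambda>_. 1::nat) {i. i \<in> ?S \<and> h i = C}) = sum (\<lambda>_. 1::nat) ?S"
    by (rule sum.group[OF fS fT sub])
  moreover have "\<And>C. C \<in> ?T \<Longrightarrow> {i. i \<in> ?S \<and> h i = C} = {i\<in>I. h i = C}"
    by auto
  ultimately have "(\<Sum>C\<in>?T. card {i\<in>I. h i = C}) = card ?S"
    by (metis (no_types, lifting) card_eq_sum sum.cong)
  then show ?thesis by simp
qed

lemma odd_ne: "odd (card X) \<Longrightarrow> X \<noteq> {}"
  by auto

lemma f2sum_mem: "C \<in> f2sum g I \<longleftrightarrow> odd (card {i\<in>I. cls (g i) = C})"
  by (simp add: f2sum_def)

lemma f2sum_sub: "f2sum g I \<subseteq> cls ` g ` I"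
proof
  fix C assume "C \<in> f2sum g I"
  then have "odd (card {i\<in>I. cls (g i) = C})" by (simp add: f2sum_def)
  then have "{i\<in>I. cls (g i) = C} \<noteq> {}" by (rule odd_ne)
  then obtain i where i: "i \<in> I" "cls (g i) = C" by blast
  then show "C \<in> cls ` g ` I" by (metis image_eqI)
qed

lemma f2sum_finite: "finite I \<Longrightarrow> finite (f2sum g I)"
  by (rule finite_subset[OF f2sum_sub]) simp

lemma f2sum_count:
  assumes "finite I"
  shows "odd (card {C\<in>f2sum g I. P C}) \<longleftrightarrow> odd (card {i\<in>I. P (cls (g i))})"
proof -
  let ?h = "\<lambda>i. cls (g i)"
  have "card {i\<in>I. P (?h i)} = (\<Sum>C\<in>{C\<in>?h ` I. P C}. card {i\<in>I. ?h i = C})"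
    using card_fibres[OF assms] .
  moreover have "odd (\<Sum>C\<in>{C\<in>?h ` I. P C}. card {i\<in>I. ?h i = C})
     \<longleftrightarrow> odd (card {C\<in>{C\<in>?h ` I. P C}. odd (card {i\<in>I. ?h i = C})})"
    using assms by (intro odd_sum_card) simp
  moreover have "{C\<in>{C\<in>?h ` I. P C}. odd (card {i\<in>I. ?h i = C})} = {C\<in>f2sum g I. P C}"
    using f2sum_sub[of g I] by (auto simp: f2sum_def image_image)
  ultimately show ?thesis by simp
qed

lemma lin_mem: "C \<in> lin F a \<longleftrightarrow> odd (card {D\<in>a. C \<in> F D})"
  by (simp add: lin_def)

lemma lin_sub: "lin F a \<subseteq> (\<Union>D\<in>a. F D)"
proof
  fix C assume "C \<in> lin F a"
  then have "odd (card {D\<in>a. C \<in> F D})" by (simp add: lin_def)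
  then have "{D\<in>a. C \<in> F D} \<noteq> {}" by (rule odd_ne)
  then show "C \<in> (\<Union>D\<in>a. F D)" by blast
qed

lemma lin_finite: "finite a \<Longrightarrow> (\<And>D. D \<in> a \<Longrightarrow> finite (F D)) \<Longrightarrow> finite (lin F a)"
  by (rule finite_subset[OF lin_sub]) auto

lemma lin_count:
  assumes "finite a" "\<And>D. D \<in> a \<Longrightarrow> finite (F D)"
  shows "odd (card {C\<in>lin F a. P C}) \<longleftrightarrow> odd (\<Sum>D\<in>a. card {C\<in>F D. P C})"
proof -
  let ?U = "{C\<in>(\<Union>D\<in>a. F D). P C}"
  have fU: "finite ?U" using assms by auto
  have "{C\<in>lin F a. P C} = {C\<in>?U. odd (card {D\<in>a. C \<in> F D})}"
    using lin_sub[of F a] by (auto simp: lin_def)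
  then have "odd (card {C\<in>lin F a. P C}) \<longleftrightarrow> odd (\<Sum>C\<in>?U. card {D\<in>a. C \<in> F D})"
    using odd_sum_card[OF fU, of "\<lambda>C. card {D\<in>a. C \<in> F D}"] by simp
  also have "(\<Sum>C\<in>?U. card {D\<in>a. C \<in> F D}) = (\<Sum>D\<in>a. card {C\<in>?U. C \<in> F D})"
    using sum_card_swap[OF fU assms(1)] .
  also have "\<dots> = (\<Sum>D\<in>a. card {C\<in>F D. P C})"
    by (rule sum.cong) (auto intro!: arg_cong[where f=card])
  finally show ?thesis .
qed

section \<open>Isomorphisms\<close>

definition iso_by :: "(nat \<Rightarrow> nat) \<Rightarrow> 'v ptree \<Rightarrow> 'v ptree \<Rightarrow> bool" where
  "iso_by f T T' \<longleftrightarrow> bij_betw f (nodes T) (nodes T')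
      \<and> arrs T' = (\<lambda>(a, b). (f a, f b)) ` arrs T
      \<and> (\<forall>x\<in>nodes T. lab T' (f x) = lab T x)"

lemma ptree_iso_iff: "ptree_iso T T' \<longleftrightarrow> (\<exists>f. iso_by f T T')"
  by (simp add: ptree_iso_def iso_by_def)

definition wft :: "'v ptree \<Rightarrow> bool" where
  "wft T \<longleftrightarrow> arrs T \<subseteq> nodes T \<times> nodes T"

lemma dtree_wf: "is_dtree T \<Longrightarrow> wft T"
  by (simp add: is_dtree_def wft_def)

lemma path_dtree: "is_path E T \<Longrightarrow> is_dtree T"
  by (simp add: is_path_def)

lemma iso_id: "iso_by id T T"
  by (simp add: iso_by_def)

lemma iso_wf: "iso_by f T T' \<Longrightarrow> wft T \<Longrightarrow> wft T'"
  by (auto simp: iso_by_def wft_def bij_betw_def)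

lemma iso_arr: "iso_by f T T' \<Longrightarrow> (x, y) \<in> arrs T \<Longrightarrow> (f x, f y) \<in> arrs T'"
  by (auto simp: iso_by_def)

lemma iso_arr_iff:
  assumes "iso_by f T T'" "wft T" "x \<in> nodes T" "y \<in> nodes T"
  shows "(f x, f y) \<in> arrs T' \<longleftrightarrow> (x, y) \<in> arrs T"
proof
  assume "(f x, f y) \<in> arrs T'"
  then obtain a b where ab: "(a, b) \<in> arrs T" "f a = f x" "f b = f y"
    using assms(1) by (auto simp: iso_by_def)
  have inj: "inj_on f (nodes T)" using assms(1) by (simp add: iso_by_def bij_betw_def)
  have "a \<in> nodes T" "b \<in> nodes T" using ab assms(2) by (auto simp: wft_def)
  then have "a = x" "b = y" using inj ab assms(3,4) by (auto dest: inj_onD)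
  then show "(x, y) \<in> arrs T" using ab by simp
qed (rule iso_arr[OF assms(1)])

lemma iso_node: "iso_by f T T' \<Longrightarrow> x \<in> nodes T \<Longrightarrow> f x \<in> nodes T'"
  by (auto simp: iso_by_def bij_betw_def)

lemma iso_lab: "iso_by f T T' \<Longrightarrow> x \<in> nodes T \<Longrightarrow> lab T' (f x) = lab T x"
  by (auto simp: iso_by_def)

lemma iso_inj: "iso_by f T T' \<Longrightarrow> inj_on f (nodes T)"
  by (auto simp: iso_by_def bij_betw_def)

lemma iso_alab:
  assumes "iso_by f T T'" "x \<in> nodes T" "y \<in> nodes T"
  shows "alab T' (f x, f y) = alab T (x, y)"
  using assms by (simp add: alab_def iso_lab)

lemma iso_trans:
  assumes "iso_by f T1 T2" "iso_by g T2 T3"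
  shows "iso_by (g \<circ> f) T1 T3"
proof -
  have "bij_betw (g \<circ> f) (nodes T1) (nodes T3)"
    using assms by (auto simp: iso_by_def intro: bij_betw_trans)
  moreover have "arrs T3 = (\<lambda>(a, b). ((g \<circ> f) a, (g \<circ> f) b)) ` arrs T1"
    using assms unfolding iso_by_def by (auto simp: image_image case_prod_beta)
  moreover have "\<forall>x\<in>nodes T1. lab T3 ((g \<circ> f) x) = lab T1 x"
  proof
    fix x assume x: "x \<in> nodes T1"
    then have "f x \<in> nodes T2" by (rule iso_node[OF assms(1)])
    then show "lab T3 ((g \<circ> f) x) = lab T1 x"
      using iso_lab[OF assms(1) x] iso_lab[OF assms(2)] by simp
  qed
  ultimately show ?thesis by (simp add: iso_by_def)
qed

lemma iso_sym:
  assumes "iso_by f T T'" "wft T"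
  shows "iso_by (inv_into (nodes T) f) T' T"
proof -
  let ?g = "inv_into (nodes T) f"
  have b: "bij_betw f (nodes T) (nodes T')" using assms by (simp add: iso_by_def)
  have bg: "bij_betw ?g (nodes T') (nodes T)" by (rule bij_betw_inv_into[OF b])
  have gf: "\<And>x. x \<in> nodes T \<Longrightarrow> ?g (f x) = x" using b by (simp add: bij_betw_def)
  have A: "arrs T' = (\<lambda>(a, b). (f a, f b)) ` arrs T" using assms by (simp add: iso_by_def)
  have "arrs T = (\<lambda>(a, b). (?g a, ?g b)) ` arrs T'"
  proof -
    have "(\<lambda>(a, b). (?g a, ?g b)) ` arrs T' = (\<lambda>(a, b). (?g (f a), ?g (f b))) ` arrs T"
      unfolding A image_image by (simp add: case_prod_beta)
    also have "\<dots> = id ` arrs T"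
      by (rule image_cong[OF refl]) (use assms(2) gf in \<open>auto simp: wft_def\<close>)
    also have "\<dots> = arrs T" by simp
    finally show ?thesis by simp
  qed
  moreover have "\<forall>x\<in>nodes T'. lab T (?g x) = lab T' x"
  proof
    fix x assume "x \<in> nodes T'"
    then obtain y where "y \<in> nodes T" "x = f y" using b by (auto simp: bij_betw_def)
    then show "lab T (?g x) = lab T' x" using gf assms(1) by (simp add: iso_lab)
  qed
  ultimately show ?thesis using bg by (simp add: iso_by_def)
qed

lemma ptree_iso_trans: "ptree_iso T1 T2 \<Longrightarrow> ptree_iso T2 T3 \<Longrightarrow> ptree_iso T1 T3"
  unfolding ptree_iso_iff using iso_trans by blast

lemma ptree_iso_sym: "ptree_iso T T' \<Longrightarrow> wft T \<Longrightarrow> ptree_iso T' T"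
  unfolding ptree_iso_iff using iso_sym by blast

lemma ptree_iso_refl: "ptree_iso T T"
  unfolding ptree_iso_iff using iso_id by blast

lemma cls_eq_iff: "wft T \<Longrightarrow> cls T = cls T' \<longleftrightarrow> ptree_iso T T'"
proof
  assume "cls T = cls T'"
  then show "ptree_iso T T'" using ptree_iso_refl[of T'] by (auto simp: cls_def)
next
  assume a: "ptree_iso T T'" "wft T"
  then have b: "ptree_iso T' T" by (rule ptree_iso_sym)
  show "cls T = cls T'"
    using a b by (auto simp: cls_def intro: ptree_iso_trans)
qed

lemma rep_cls: "ptree_iso T (rep (cls T))"
proof -
  have "T \<in> cls T" by (simp add: cls_def ptree_iso_refl)
  then have "rep (cls T) \<in> cls T" unfolding rep_def by (rule someI)
  then show ?thesis by (simp add: cls_def)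
qed

lemma iso_rtrancl:
  assumes "iso_by f T T'" "(x, y) \<in> (arrs T \<union> (arrs T)\<inverse>)\<^sup>*"
  shows "(f x, f y) \<in> (arrs T' \<union> (arrs T')\<inverse>)\<^sup>*"
  using assms(2)
proof (induction rule: rtrancl_induct)
  case base then show ?case by simp
next
  case (step y z)
  then have "(f y, f z) \<in> arrs T' \<union> (arrs T')\<inverse>"
    using iso_arr[OF assms(1)] by auto
  with step.IH show ?case by (rule rtrancl_into_rtrancl)
qed

lemma iso_dtree:
  assumes "iso_by f T T'" "is_dtree T"
  shows "is_dtree T'"
proof -
  have w: "wft T" using assms(2) by (rule dtree_wf)
  have b: "bij_betw f (nodes T) (nodes T')" using assms(1) by (simp add: iso_by_def)
  have A: "arrs T' = (\<lambda>(a, b). (f a, f b)) ` arrs T" using assms(1) by (simp add: iso_by_def)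
  have inj: "inj_on f (nodes T)" using b by (simp add: bij_betw_def)
  have injA: "inj_on (\<lambda>(a, b). (f a, f b)) (arrs T)"
    using inj w by (auto simp: inj_on_def wft_def)
  have cA: "card (arrs T') = card (arrs T)" unfolding A using card_image[OF injA] .
  have cN: "card (nodes T') = card (nodes T)" using bij_betw_same_card[OF b] by simp
  have fin: "finite (nodes T')" using bij_betw_finite[OF b] assms(2) by (auto simp: is_dtree_def)
  have ne: "nodes T' \<noteq> {}" using b assms(2) by (auto simp: is_dtree_def bij_betw_def)
  have sub: "arrs T' \<subseteq> nodes T' \<times> nodes T'" using iso_wf[OF assms(1) w] by (simp add: wft_def)
  have noloop: "\<forall>x. (x, x) \<notin> arrs T'"
  proof (intro allI notI)
    fix x assume "(x, x) \<in> arrs T'"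
    then obtain a c where "(a, c) \<in> arrs T" "f a = x" "f c = x" unfolding A by auto
    moreover then have "a \<in> nodes T" "c \<in> nodes T" using w by (auto simp: wft_def)
    ultimately have "a = c" using inj by (auto dest: inj_onD)
    then show False using \<open>(a, c) \<in> arrs T\<close> assms(2) by (auto simp: is_dtree_def)
  qed
  have conn: "\<forall>x\<in>nodes T'. \<forall>y\<in>nodes T'. (x, y) \<in> (arrs T' \<union> (arrs T')\<inverse>)\<^sup>*"
  proof (intro ballI)
    fix x y assume "x \<in> nodes T'" "y \<in> nodes T'"
    then have "x \<in> f ` nodes T" "y \<in> f ` nodes T" using b by (auto simp: bij_betw_def)
    then obtain x0 y0 where "x0 \<in> nodes T" "y0 \<in> nodes T" "x = f x0" "y = f y0"
      by blast
    then show "(x, y) \<in> (arrs T' \<union> (arrs T')\<inverse>)\<^sup>*"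
      using iso_rtrancl[OF assms(1)] assms(2) by (auto simp: is_dtree_def)
  qed
  show ?thesis using fin ne sub noloop conn cA cN assms(2) by (simp add: is_dtree_def)
qed

lemma iso_path:
  assumes "iso_by f T T'" "is_path E T"
  shows "is_path E T'"
proof -
  have d: "is_dtree T" using assms(2) by (simp add: is_path_def)
  have w: "wft T" using d by (rule dtree_wf)
  have A: "arrs T' = (\<lambda>(a, b). (f a, f b)) ` arrs T" using assms(1) by (simp add: iso_by_def)
  have b: "bij_betw f (nodes T) (nodes T')" using assms(1) by (simp add: iso_by_def)
  have l1: "\<forall>x\<in>nodes T'. lab T' x \<in> E"
  proof
    fix x assume "x \<in> nodes T'"
    then obtain y where "y \<in> nodes T" "x = f y" using b by (auto simp: bij_betw_def)
    then show "lab T' x \<in> E" using assms by (simp add: iso_lab is_path_def)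
  qed
  have l2: "\<forall>e\<in>arrs T'. \<exists>K. snd (lab T' (fst e)) \<inter> fst (lab T' (snd e)) = {K}"
  proof
    fix e assume "e \<in> arrs T'"
    then obtain x y where xy: "(x, y) \<in> arrs T" "e = (f x, f y)" unfolding A by auto
    then have "x \<in> nodes T" "y \<in> nodes T" using w by (auto simp: wft_def)
    then show "\<exists>K. snd (lab T' (fst e)) \<inter> fst (lab T' (snd e)) = {K}"
      using xy assms by (auto simp: iso_lab is_path_def)
  qed
  have l3: "\<forall>e\<in>arrs T'. \<forall>e'\<in>arrs T'. e \<noteq> e' \<and> (fst e = fst e' \<or> snd e = snd e')
            \<longrightarrow> alab T' e \<noteq> alab T' e'"
  proof (intro ballI impI)
    fix e e' assume "e \<in> arrs T'" "e' \<in> arrs T'" and c: "e \<noteq> e' \<and> (fst e = fst e' \<or> snd e = snd e')"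
    then obtain x y x' y' where xy: "(x, y) \<in> arrs T" "e = (f x, f y)" "(x', y') \<in> arrs T" "e' = (f x', f y')"
      unfolding A by auto
    then have n: "x \<in> nodes T" "y \<in> nodes T" "x' \<in> nodes T" "y' \<in> nodes T" using w by (auto simp: wft_def)
    have inj: "inj_on f (nodes T)" using b by (simp add: bij_betw_def)
    have "(x, y) \<noteq> (x', y') \<and> (x = x' \<or> y = y')"
      using c xy n inj by (auto dest: inj_onD)
    then have "alab T (x, y) \<noteq> alab T (x', y')"
      using assms(2) xy unfolding is_path_def by (metis fst_conv snd_conv)
    then show "alab T' e \<noteq> alab T' e'" using xy n iso_alab[OF assms(1)] by simp
  qed
  show ?thesis using iso_dtree[OF assms(1) d] l1 l2 l3 by (simp add: is_path_def)
qed

lemma ptree_iso_path: "ptree_iso T T' \<Longrightarrow> is_path E T \<Longrightarrow> is_path E T'"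
  unfolding ptree_iso_iff using iso_path by blast

section \<open>Tree counting\<close>

lemma conn_card:
  assumes fV: "finite V" and fA: "finite A" and r: "r \<in> V"
    and conn: "\<forall>x\<in>V. (x, r) \<in> (A \<union> A\<inverse>)\<^sup>*"
  shows "card V \<le> card A + 1"
proof -
  let ?S = "A \<union> A\<inverse>"
  define d where "d x = (LEAST n. (x, r) \<in> ?S ^^ n)" for x
  have dex: "(x, r) \<in> ?S ^^ d x" if "x \<in> V" for x
  proof -
    have "(x, r) \<in> ?S\<^sup>*" using conn that by blast
    then obtain n where "(x, r) \<in> ?S ^^ n" using rtrancl_imp_relpow by blast
    then show ?thesis unfolding d_def by (rule LeastI)
  qed
  have dmin: "d x \<le> n" if "(x, r) \<in> ?S ^^ n" for x n
    unfolding d_def using that by (rule Least_le)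
  have step: "\<exists>z. (x, z) \<in> ?S \<and> d z < d x" if "x \<in> V" "x \<noteq> r" for x
  proof -
    have h: "(x, r) \<in> ?S ^^ d x" using dex that by simp
    have "d x \<noteq> 0"
    proof
      assume "d x = 0"
      then have "x = r" using h by simp
      then show False using that by simp
    qed
    then obtain m where m: "d x = Suc m" by (cases "d x") auto
    then have "(x, r) \<in> ?S ^^ Suc m" using h by simp
    then obtain z where z1: "(x, z) \<in> ?S" and z2: "(z, r) \<in> ?S ^^ m"
      by (blast dest: relpow_Suc_D2)
    have "d z \<le> m" using z2 by (rule dmin)
    then show ?thesis using m z1 by auto
  qed
  define phi where "phi x = (SOME e. e \<in> A \<and> ((fst e = x \<and> d (snd e) < d x) \<or> (snd e = x \<and> d (fst e) < d x)))" for x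
  have phi: "phi x \<in> A \<and> ((fst (phi x) = x \<and> d (snd (phi x)) < d x) \<or> (snd (phi x) = x \<and> d (fst (phi x)) < d x))"
    if xV: "x \<in> V" and xr: "x \<noteq> r" for x
  proof -
    obtain z where z: "(x, z) \<in> ?S" "d z < d x" using step[OF xV xr] by blast
    have "\<exists>e. e \<in> A \<and> ((fst e = x \<and> d (snd e) < d x) \<or> (snd e = x \<and> d (fst e) < d x))"
    proof (cases "(x, z) \<in> A")
      case True
      then show ?thesis using z(2) by (intro exI[where x="(x, z)"]) simp
    next
      case False
      then have "(z, x) \<in> A" using z(1) by blast
      then show ?thesis using z(2) by (intro exI[where x="(z, x)"]) simp
    qed
    then show ?thesis unfolding phi_def by (rule someI_ex)
  qed
  have inj: "inj_on phi (V - {r})"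
  proof (rule inj_onI)
    fix x y assume xy: "x \<in> V - {r}" "y \<in> V - {r}" "phi x = phi y"
    have px: "(fst (phi x) = x \<and> d (snd (phi x)) < d x) \<or> (snd (phi x) = x \<and> d (fst (phi x)) < d x)"
      using phi[of x] xy by blast
    have py: "(fst (phi y) = y \<and> d (snd (phi y)) < d y) \<or> (snd (phi y) = y \<and> d (fst (phi y)) < d y)"
      using phi[of y] xy by blast
    obtain u w where uw: "phi x = (u, w)" by fastforce
    then have uw2: "phi y = (u, w)" using xy(3) by simp
    have px': "(u = x \<and> d w < d x) \<or> (w = x \<and> d u < d x)" using px uw by simp
    have py': "(u = y \<and> d w < d y) \<or> (w = y \<and> d u < d y)" using py uw2 by simp
    show "x = y"
      using px' py' by (elim disjE conjE) auto
  qed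
  have "phi ` (V - {r}) \<subseteq> A" by (intro image_subsetI) (use phi in blast)
  then have "card (V - {r}) \<le> card A" using card_inj_on_le[OF inj _ fA] by simp
  moreover have "card V = card (V - {r}) + 1" using fV r
    by (metis Suc_eq_plus1 card_Suc_Diff1)
  ultimately show ?thesis by simp
qed

lemma dtree_no2cycle:
  assumes "is_dtree T" "(a, b) \<in> arrs T"
  shows "(b, a) \<notin> arrs T"
proof
  assume ba: "(b, a) \<in> arrs T"
  let ?A = "arrs T - {(b, a)}"
  have ab: "(a, b) \<noteq> (b, a)" using assms by (auto simp: is_dtree_def)
  have fN: "finite (nodes T)" using assms by (simp add: is_dtree_def)
  have "arrs T \<subseteq> nodes T \<times> nodes T" using assms by (simp add: is_dtree_def)
  then have fA: "finite (arrs T)" using fN by (meson finite_SigmaI finite_subset)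
  have S: "?A \<union> ?A\<inverse> = arrs T \<union> (arrs T)\<inverse>" using ab ba assms(2) by auto
  obtain r where r: "r \<in> nodes T" using assms by (auto simp: is_dtree_def)
  have fA': "finite ?A" using fA by simp
  have conn: "\<forall>x\<in>nodes T. \<forall>y\<in>nodes T. (x, y) \<in> (arrs T \<union> (arrs T)\<inverse>)\<^sup>*"
    using assms(1) by (simp add: is_dtree_def)
  have c: "\<forall>x\<in>nodes T. (x, r) \<in> (?A \<union> ?A\<inverse>)\<^sup>*"
    unfolding S
  proof
    fix x assume "x \<in> nodes T"
    then show "(x, r) \<in> (arrs T \<union> (arrs T)\<inverse>)\<^sup>*" using conn r by (meson bspec)
  qed
  have "card (nodes T) \<le> card ?A + 1"
    by (rule conn_card[OF fN fA' r c])
  moreover have "card ?A + 1 = card (arrs T)" using ba fA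
    by (metis Suc_eq_plus1 card_Suc_Diff1)
  ultimately show False using assms by (simp add: is_dtree_def)
qed


section \<open>Free actions of prime order\<close>

lemma funpow_in:
  assumes "\<forall>x\<in>X. g x \<in> X" "x \<in> X"
  shows "(g ^^ n) x \<in> X"
  using assms by (induction n) auto

lemma funpow_mult_fix:
  assumes "(g ^^ a) x = x"
  shows "(g ^^ (a * k)) x = x"
proof (induction k)
  case 0 then show ?case by simp
next
  case (Suc k)
  have "(g ^^ (a * Suc k)) x = (g ^^ a) ((g ^^ (a * k)) x)"
    by (simp add: funpow_add)
  also have "\<dots> = x" using Suc assms by simp
  finally show ?case .
qed

lemma free_dvd:
  assumes "finite X" "\<forall>x\<in>X. g x \<in> X" "\<forall>x\<in>X. (g ^^ p) x = x" "\<forall>x\<in>X. g x \<noteq> x" "prime p"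
  shows "p dvd card X"
  using assms
proof (induction "card X" arbitrary: X rule: less_induct)
  case less
  show ?case
  proof (cases "X = {}")
    case True then show ?thesis by simp
  next
    case False
    then obtain x where x: "x \<in> X" by blast
    have p0: "p > 0" using prime_gt_1_nat[OF less.prems(5)] by simp
    have injg: "a = b" if "a \<in> X" "b \<in> X" "g a = g b" for a b
    proof -
      obtain q where q: "p = Suc q" using p0 by (cases p) auto
      have "a = (g ^^ p) a" using less.prems(3) that by simp
      also have "\<dots> = (g ^^ q) (g a)" unfolding q by (simp add: funpow_swap1)
      also have "\<dots> = (g ^^ q) (g b)" using that by simp
      also have "\<dots> = (g ^^ p) b" unfolding q by (simp add: funpow_swap1)
      also have "\<dots> = b" using less.prems(3) that by simp
      finally show ?thesis .
    qed
    have injpow: "a = b" if "a \<in> X" "b \<in> X" "(g ^^ n) a = (g ^^ n) b" for a b n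
      using that
    proof (induction n arbitrary: a b)
      case 0 then show ?case by simp
    next
      case (Suc n)
      have "(g ^^ n) (g a) = (g ^^ n) (g b)" using Suc.prems by (simp add: funpow_swap1)
      moreover have "g a \<in> X" "g b \<in> X" using Suc.prems less.prems(2) by auto
      ultimately have "g a = g b" using Suc.IH by blast
      then show ?case using injg Suc.prems by blast
    qed
    let ?O = "(\<lambda>i. (g ^^ i) x) ` {..<p}"
    have OX: "?O \<subseteq> X" using funpow_in[OF less.prems(2) x] by auto
    have inj: "inj_on (\<lambda>i. (g ^^ i) x) {..<p}"
    proof (rule ccontr)
      assume "\<not> inj_on (\<lambda>i. (g ^^ i) x) {..<p}"
      then obtain i j where ij: "i < p" "j < p" "i \<noteq> j" "(g ^^ i) x = (g ^^ j) x"
        unfolding inj_on_def by auto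
      have "\<exists>i j. i < j \<and> j < p \<and> (g ^^ i) x = (g ^^ j) x"
      proof (cases "i < j")
        case True then show ?thesis using ij by blast
      next
        case False then have "j < i" using ij by simp
        then have "j < i \<and> i < p \<and> (g ^^ j) x = (g ^^ i) x" using ij by simp
        then show ?thesis by blast
      qed
      then obtain i j where ij2: "i < j" "j < p" "(g ^^ i) x = (g ^^ j) x" by blast
      define d where "d = j - i"
      have d: "0 < d" "d < p" using ij2 by (auto simp: d_def)
      have jd: "j = i + d" using ij2 by (simp add: d_def)
      have "(g ^^ j) x = (g ^^ i) ((g ^^ d) x)"
        unfolding jd by (simp add: funpow_add)
      then have "(g ^^ i) ((g ^^ d) x) = (g ^^ i) x" using ij2 by simp
      moreover have "(g ^^ d) x \<in> X" using funpow_in[OF less.prems(2) x] .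
      ultimately have gd: "(g ^^ d) x = x" using injpow x by blast
      have cop: "gcd d p = 1"
      proof -
        have "gcd d p dvd p" by simp
        then have "gcd d p = 1 \<or> gcd d p = p" using less.prems(5) by (simp add: prime_nat_iff)
        moreover have "gcd d p \<noteq> p"
        proof
          assume "gcd d p = p"
          then have "p dvd d" by (metis gcd_dvd1)
          then show False using d by (simp add: nat_dvd_not_less)
        qed
        ultimately show ?thesis by simp
      qed
      obtain u v where uv: "d * u = p * v + gcd d p" using bezout_nat[of d p] d by blast
      have "(g ^^ (d * u)) x = x" using funpow_mult_fix[OF gd] .
      moreover have "(g ^^ (d * u)) x = g ((g ^^ (p * v)) x)"
        using uv cop by (simp add: funpow_add)
      moreover have "(g ^^ (p * v)) x = x" using funpow_mult_fix[where g=g and a=p and x=x and k=v] less.prems(3) x by simp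
      ultimately have "g x = x" by simp
      then show False using less.prems(4) x by blast
    qed
    have cO: "card ?O = p" using card_image[OF inj] by simp
    let ?Y = "X - ?O"
    have Ymap: "\<forall>z\<in>?Y. g z \<in> ?Y"
    proof
      fix z assume z: "z \<in> ?Y"
      have gzX: "g z \<in> X" using z less.prems(2) by blast
      have "g z \<notin> ?O"
      proof
        assume "g z \<in> ?O"
        then obtain i where i: "i < p" "g z = (g ^^ i) x" by blast
        obtain q where q: "p = Suc q" using p0 by (cases p) auto
        show False
        proof (cases i)
          case 0
          then have "g z = (g ^^ p) x" using i less.prems(3) x by simp
          also have "\<dots> = g ((g ^^ q) x)" unfolding q by simp
          finally have "z = (g ^^ q) x"
            using injg z funpow_in[OF less.prems(2) x, of q] by blast
          then show False using z q by auto
        next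
          case (Suc i')
          then have "g z = g ((g ^^ i') x)" using i by simp
          then have "z = (g ^^ i') x"
            using injg z funpow_in[OF less.prems(2) x, of i'] by blast
          then show False using z i Suc by auto
        qed
      qed
      then show "g z \<in> ?Y" using gzX by blast
    qed
    have fO: "finite ?O" by simp
    have cY: "card ?Y = card X - p" using card_Diff_subset[OF fO OX] cO by simp
    have pX: "p \<le> card X" using card_mono[OF less.prems(1) OX] cO by simp
    have "p dvd card ?Y"
    proof (rule less.hyps)
      show "card ?Y < card X" using cY pX p0 by simp
      show "finite ?Y" using less.prems(1) by simp
      show "\<forall>x\<in>?Y. g x \<in> ?Y" by (rule Ymap)
      show "\<forall>x\<in>?Y. (g ^^ p) x = x" using less.prems(3) by simp
      show "\<forall>x\<in>?Y. g x \<noteq> x" using less.prems(4) by simp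
      show "prime p" by (rule less.prems(5))
    qed
    moreover have "card X = card ?Y + p" using cY pX by simp
    ultimately show ?thesis by simp
  qed
qed

section \<open>Automorphisms of paths are trivial\<close>

lemma wft_finite: "wft T \<Longrightarrow> finite (nodes T) \<Longrightarrow> finite (arrs T)"
  by (rule finite_subset[of _ "nodes T \<times> nodes T"]) (auto simp: wft_def)

lemma iso_cong:
  assumes "iso_by f T T'" "wft T" "\<forall>x\<in>nodes T. f x = g x"
  shows "iso_by g T T'"
proof -
  have "bij_betw g (nodes T) (nodes T')"
    using assms by (metis bij_betw_cong iso_by_def)
  moreover have "(\<lambda>(a, b). (f a, f b)) ` arrs T = (\<lambda>(a, b). (g a, g b)) ` arrs T"
    by (rule image_cong[OF refl]) (use assms(2,3) in \<open>auto simp: wft_def\<close>)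
  ultimately show ?thesis using assms by (simp add: iso_by_def)
qed

lemma propagate:
  assumes P: "is_path E T'" and f: "iso_by f T T'" and f': "iso_by f' T T'"
    and d: "is_dtree T" and x0: "x0 \<in> nodes T" "f x0 = f' x0"
  shows "\<forall>x\<in>nodes T. f x = f' x"
proof -
  have w: "wft T" using d by (rule dtree_wf)
  have nb: "f w = f' w" if u: "u \<in> nodes T" "f u = f' u" and uw: "(u, w) \<in> arrs T \<or> (w, u) \<in> arrs T" for u w
  proof (rule ccontr)
    assume ne: "f w \<noteq> f' w"
    have wn: "w \<in> nodes T" using uw w by (auto simp: wft_def)
    have dist: "\<forall>e\<in>arrs T'. \<forall>e'\<in>arrs T'. e \<noteq> e' \<and> (fst e = fst e' \<or> snd e = snd e')
            \<longrightarrow> alab T' e \<noteq> alab T' e'" using P by (simp add: is_path_def)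
    show False
    proof (cases "(u, w) \<in> arrs T")
      case True
      have a1: "(f u, f w) \<in> arrs T'" using iso_arr[OF f True] .
      have a2: "(f u, f' w) \<in> arrs T'" using iso_arr[OF f' True] u by simp
      have "alab T' (f u, f w) = alab T (u, w)" using iso_alab[OF f u(1) wn] .
      moreover have "alab T' (f' u, f' w) = alab T (u, w)" using iso_alab[OF f' u(1) wn] .
      ultimately have "alab T' (f u, f w) = alab T' (f u, f' w)" using u by simp
      then show False using dist a1 a2 ne by fastforce
    next
      case False
      then have F: "(w, u) \<in> arrs T" using uw by blast
      have a1: "(f w, f u) \<in> arrs T'" using iso_arr[OF f F] .
      have a2: "(f' w, f u) \<in> arrs T'" using iso_arr[OF f' F] u by simp
      have "alab T' (f w, f u) = alab T (w, u)" using iso_alab[OF f wn u(1)] .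
      moreover have "alab T' (f' w, f' u) = alab T (w, u)" using iso_alab[OF f' wn u(1)] .
      ultimately have "alab T' (f w, f u) = alab T' (f' w, f u)" using u by simp
      then show False using dist a1 a2 ne by fastforce
    qed
  qed
  have conn: "\<forall>x\<in>nodes T. \<forall>y\<in>nodes T. (x, y) \<in> (arrs T \<union> (arrs T)\<inverse>)\<^sup>*"
    using d by (simp add: is_dtree_def)
  show ?thesis
  proof
    fix x assume x: "x \<in> nodes T"
    have "(x0, x) \<in> (arrs T \<union> (arrs T)\<inverse>)\<^sup>*" using conn x x0(1) by (meson bspec)
    then have "x \<in> nodes T \<and> f x = f' x"
    proof (induction rule: rtrancl_induct)
      case base then show ?case using x0 by simp
    next
      case (step y z)
      then have "(y, z) \<in> arrs T \<or> (z, y) \<in> arrs T" by blast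
      moreover then have "z \<in> nodes T" using w by (auto simp: wft_def)
      ultimately show ?case using nb step.IH by blast
    qed
    then show "f x = f' x" by simp
  qed
qed

lemma funpow_map_prod: fixes g :: "'a \<Rightarrow> 'a" shows "((\<lambda>(a, b). (g a, g b)) ^^ n) e = ((g ^^ n) (fst e), (g ^^ n) (snd e))"
  by (induction n) (simp_all add: case_prod_beta)

lemma aut_id:
  assumes P: "is_path E T" and k: "iso_by k T T"
  shows "\<forall>x\<in>nodes T. k x = x"
proof (rule ccontr)
  assume nid: "\<not> (\<forall>x\<in>nodes T. k x = x)"
  have d: "is_dtree T" using P by (rule path_dtree)
  have w: "wft T" using d by (rule dtree_wf)
  have fN: "finite (nodes T)" using d by (simp add: is_dtree_def)
  define k' where "k' x = (if x \<in> nodes T then k x else x)" for x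
  have k'iso: "iso_by k' T T" using iso_cong[OF k w] by (simp add: k'_def)
  have bij: "bij_betw k' (nodes T) (nodes T)" using k'iso by (simp add: iso_by_def)
  have "k' permutes (nodes T)" by (rule bij_imp_permutes[OF bij]) (simp add: k'_def)
  then have "permutation k'" using fN permutation_permutes by blast
  then have ex: "\<exists>n. n > 0 \<and> k' ^^ n = id" using permutation_is_nilpotent by metis
  define m where "m = (LEAST n. n > 0 \<and> k' ^^ n = id)"
  have m: "m > 0" "k' ^^ m = id" using LeastI_ex[OF ex] by (auto simp: m_def)
  have mmin: "\<not> (n > 0 \<and> k' ^^ n = id)" if "n < m" for n
    using that not_less_Least m_def by blast
  have powiso: "iso_by (k' ^^ n) T T" for n
  proof (induction n)
    case 0 have "iso_by (\<lambda>x. x) T T" using iso_id[of T] by (simp add: id_def)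
    then show ?case by (simp add: id_def)
  next
    case (Suc n)
    have "iso_by (k' \<circ> (k' ^^ n)) T T" using iso_trans[OF Suc k'iso] .
    then show ?case by (simp only: funpow.simps(2))
  qed
  have out: "(k' ^^ n) x = x" if "x \<notin> nodes T" for n x
    using that by (induction n) (auto simp: k'_def)
  have "k' \<noteq> id" using nid by (auto simp: k'_def fun_eq_iff)
  then have "m \<noteq> 1" using m by auto
  then obtain p where p: "prime p" "p dvd m" using prime_factor_nat by blast
  define q where "q = m div p"
  have pq: "m = q * p" using p(2) by (simp add: q_def)
  have q0: "q > 0" using m(1) pq by (cases q) auto
  have p1: "p > 1" using prime_gt_1_nat[OF p(1)] .
  have qm: "q < m" using pq q0 p1 by simp
  define g where "g = k' ^^ q"
  have gp: "g ^^ p = id" using m(2) pq by (simp add: g_def funpow_mult)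
  have gnid: "g \<noteq> id" using mmin[OF qm] q0 by (simp add: g_def)
  have giso: "iso_by g T T" by (simp add: g_def powiso)
  obtain x1 where x1: "g x1 \<noteq> x1" using gnid by (auto simp: fun_eq_iff)
  have x1n: "x1 \<in> nodes T" using x1 out by (auto simp: g_def)
  have nofix: "\<forall>x\<in>nodes T. g x \<noteq> x"
  proof (intro ballI notI)
    fix x0 assume x0: "x0 \<in> nodes T" "g x0 = x0"
    have "\<forall>x\<in>nodes T. g x = id x" by (rule propagate[OF P giso iso_id d x0(1)]) (use x0 in simp)
    then show False using x1 x1n by simp
  qed
  have gN: "\<forall>x\<in>nodes T. g x \<in> nodes T" using giso by (simp add: iso_node)
  have dvdN: "p dvd card (nodes T)"
    by (rule free_dvd[OF fN gN _ nofix p(1)]) (simp add: gp)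
  let ?h = "\<lambda>(a, b). (g a, g b)"
  have fA: "finite (arrs T)" using w fN by (rule wft_finite)
  have hA: "\<forall>e\<in>arrs T. ?h e \<in> arrs T" using iso_arr[OF giso] by auto
  have hp: "\<forall>e\<in>arrs T. (?h ^^ p) e = e" using gp by (simp add: funpow_map_prod)
  have hfix: "\<forall>e\<in>arrs T. ?h e \<noteq> e"
  proof (intro ballI notI)
    fix e assume e: "e \<in> arrs T" "?h e = e"
    then have "fst e \<in> nodes T" using w by (auto simp: wft_def)
    moreover have "g (fst e) = fst e" using arg_cong[OF e(2), of fst] by (simp add: case_prod_beta)
    ultimately show False using nofix by blast
  qed
  have dvdA: "p dvd card (arrs T)" by (rule free_dvd[OF fA hA hp hfix p(1)])
  have "card (nodes T) = card (arrs T) + 1" using d by (simp add: is_dtree_def)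
  then have "p dvd 1" using dvdN dvdA by (metis dvd_add_right_iff)
  then show False using p1 by simp
qed

lemma iso_unique:
  assumes P: "is_path E T" and f: "iso_by f T T'" and f': "iso_by f' T T'"
  shows "\<forall>x\<in>nodes T. f x = f' x"
proof
  fix x assume x: "x \<in> nodes T"
  have w: "wft T" using P by (simp add: is_path_def dtree_wf)
  let ?g = "inv_into (nodes T) f'"
  have "iso_by ?g T' T" using iso_sym[OF f' w] .
  then have "iso_by (?g \<circ> f) T T" using iso_trans[OF f] by blast
  then have "?g (f x) = x" using aut_id[OF P] x by fastforce
  then have "f' (?g (f x)) = f' x" by simp
  moreover have "f x \<in> f' ` nodes T"
    using iso_node[OF f x] f' by (simp add: iso_by_def bij_betw_def)
  ultimately show "f x = f' x" by (simp add: f_inv_into_f)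
qed


section \<open>Higraph facts\<close>

definition mrg :: "'v hedge \<Rightarrow> 'v hedge \<Rightarrow> 'v \<Rightarrow> 'v hedge" where
  "mrg e1 e2 K = (fst e1 \<union> (fst e2 - {K}), (snd e1 - {K}) \<union> snd e2)"

lemma hsing:
  assumes H: "is_higraph E" and "x \<in> E" "y \<in> E" "L \<in> snd x \<inter> fst y"
  shows "snd x \<inter> fst y = {L}"
proof -
  have "snd x \<inter> fst y \<noteq> {}" using assms(4) by blast
  then obtain K where "snd x \<inter> fst y = {K}"
    using H assms(2,3) unfolding is_higraph_def by blast
  then show ?thesis using assms(4) by auto
qed

lemma hmerge:
  assumes H: "is_higraph E" and "x \<in> E" "y \<in> E" "snd x \<inter> fst y = {K}"
  shows "fst x \<inter> (fst y - {K}) = {} \<and> (snd x - {K}) \<inter> snd y = {} \<and> mrg x y K \<in> E"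
proof -
  have "snd x \<inter> fst y \<noteq> {}" using assms(4) by blast
  then obtain K' where K': "snd x \<inter> fst y = {K'}"
           "fst x \<inter> (fst y - {K'}) = {}"
           "(snd x - {K'}) \<inter> snd y = {}"
           "(fst x \<union> (fst y - {K'}), (snd x - {K'}) \<union> snd y) \<in> E"
    using H assms(2,3) unfolding is_higraph_def by blast
  have "K' = K" using K'(1) assms(4) by blast
  then show ?thesis using K' by (simp add: mrg_def)
qed

lemma the_elem_sing: "X = {K} \<Longrightarrow> the_elem X = K" by simp

section \<open>Gluing\<close>

context
  fixes E :: "'v hedge set" and T :: "'v ptree" and a b :: nat
  assumes H: "is_higraph E" and P: "is_path E T" and e: "(a, b) \<in> arrs T"
begin

private abbreviation "s x \<equiv> fst (lab T x)"
private abbreviation "t x \<equiv> snd (lab T x)"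
private abbreviation "K \<equiv> alab T (a, b)"
private abbreviation "ren z \<equiv> (if z = b then a else z)"

lemma gl_dtree: "is_dtree T" using P by (simp add: is_path_def)

lemma gl_wft: "wft T" using gl_dtree by (rule dtree_wf)

lemma gl_arr_nodes: "(x, y) \<in> arrs T \<Longrightarrow> x \<in> nodes T \<and> y \<in> nodes T"
  using gl_wft by (auto simp: wft_def)

lemma gl_noloop: "(x, x) \<notin> arrs T"
  using gl_dtree by (simp add: is_dtree_def)

lemma gl_ab: "a \<in> nodes T" "b \<in> nodes T" "a \<noteq> b"
  using gl_arr_nodes[OF e] gl_noloop e by auto

lemma gl_ba: "(b, a) \<notin> arrs T"
  using dtree_no2cycle[OF gl_dtree e] .

lemma gl_labE: "x \<in> nodes T \<Longrightarrow> lab T x \<in> E"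
  using P by (simp add: is_path_def)

lemma gl_sing: "(x, y) \<in> arrs T \<Longrightarrow> t x \<inter> s y = {alab T (x, y)}"
proof -
  assume xy: "(x, y) \<in> arrs T"
  then obtain L where "t x \<inter> s y = {L}" using P unfolding is_path_def by fastforce
  then show ?thesis by (simp add: alab_def)
qed

lemma gl_dist_out: "(x, y) \<in> arrs T \<Longrightarrow> (x, y') \<in> arrs T \<Longrightarrow> y \<noteq> y' \<Longrightarrow> alab T (x, y) \<noteq> alab T (x, y')"
proof -
  assume "(x, y) \<in> arrs T" "(x, y') \<in> arrs T" "y \<noteq> y'"
  moreover have "\<forall>e\<in>arrs T. \<forall>e'\<in>arrs T. e \<noteq> e' \<and> (fst e = fst e' \<or> snd e = snd e')
            \<longrightarrow> alab T e \<noteq> alab T e'" using P by (simp add: is_path_def)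
  ultimately show ?thesis by fastforce
qed

lemma gl_dist_in: "(x, y) \<in> arrs T \<Longrightarrow> (x', y) \<in> arrs T \<Longrightarrow> x \<noteq> x' \<Longrightarrow> alab T (x, y) \<noteq> alab T (x', y)"
proof -
  assume "(x, y) \<in> arrs T" "(x', y) \<in> arrs T" "x \<noteq> x'"
  moreover have "\<forall>e\<in>arrs T. \<forall>e'\<in>arrs T. e \<noteq> e' \<and> (fst e = fst e' \<or> snd e = snd e')
            \<longrightarrow> alab T e \<noteq> alab T e'" using P by (simp add: is_path_def)
  ultimately show ?thesis by fastforce
qed

lemma gl_K: "t a \<inter> s b = {K}" using gl_sing[OF e] .

lemma gl_merge: "s a \<inter> (s b - {K}) = {} \<and> (t a - {K}) \<inter> t b = {} \<and> mrg (lab T a) (lab T b) K \<in> E"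
  using hmerge[OF H gl_labE[OF gl_ab(1)] gl_labE[OF gl_ab(2)] gl_K] .

lemma gl_dj1: "s a \<inter> (s b - {K}) = {}" using gl_merge by (rule conjunct1)
lemma gl_dj2: "(t a - {K}) \<inter> t b = {}" using gl_merge by (rule conjunct1[OF conjunct2])
lemma gl_mE: "mrg (lab T a) (lab T b) K \<in> E" using gl_merge by (rule conjunct2[OF conjunct2])

lemma gl_nodes: "nodes (glue T (a, b)) = nodes T - {b}"
  by (simp add: glue_def Let_def)

lemma gl_arrs: "arrs (glue T (a, b)) = (\<lambda>(x, y). (ren x, ren y)) ` (arrs T - {(a, b)})"
  by (simp add: glue_def Let_def)

lemma gl_lab: "lab (glue T (a, b)) z = (if z = a then mrg (lab T a) (lab T b) K else lab T z)"
  by (simp add: glue_def Let_def mrg_def)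

lemma gl_arrsE:
  assumes "u \<in> arrs (glue T (a, b))"
  obtains x y where "(x, y) \<in> arrs T" "(x, y) \<noteq> (a, b)" "u = (ren x, ren y)"
proof -
  from assms obtain w where w: "w \<in> arrs T - {(a, b)}" "u = (\<lambda>(x, y). (ren x, ren y)) w"
    unfolding gl_arrs by (rule imageE)
  show thesis using that[of "fst w" "snd w"] w by (simp add: case_prod_beta)
qed

lemma gl_arrI:
  assumes "(x, y) \<in> arrs T" "(x, y) \<noteq> (a, b)"
  shows "(ren x, ren y) \<in> arrs (glue T (a, b))"
  unfolding gl_arrs by (rule rev_image_eqI[where x="(x, y)"]) (use assms in auto)

lemma gl_labE': "z \<in> nodes (glue T (a, b)) \<Longrightarrow> lab (glue T (a, b)) z \<in> E"
  using gl_mE gl_labE by (simp add: gl_lab gl_nodes)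

lemma gl_alab_sing:
  assumes xy: "(x, y) \<in> arrs T" "(x, y) \<noteq> (a, b)"
  shows "snd (lab (glue T (a, b)) (ren x)) \<inter> fst (lab (glue T (a, b)) (ren y)) = {alab T (x, y)}"
proof -
  let ?G = "glue T (a, b)"
  let ?L = "alab T (x, y)"
  have xyn: "x \<in> nodes T" "y \<in> nodes T" using gl_arr_nodes[OF xy(1)] by auto
  have xy_ne: "x \<noteq> y" using xy(1) gl_noloop by auto
  have Lin: "?L \<in> t x \<inter> s y" using gl_sing[OF xy(1)] by auto
  have rn: "ren x \<in> nodes ?G" "ren y \<in> nodes ?G" using xyn gl_ab by (auto simp: gl_nodes)
  have E1: "lab ?G (ren x) \<in> E" "lab ?G (ren y) \<in> E" using gl_labE'[OF rn(1)] gl_labE'[OF rn(2)] by auto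
  have mm: "mrg (lab T a) (lab T b) K = (s a \<union> (s b - {K}), (t a - {K}) \<union> t b)"
    by (simp add: mrg_def)
  have "?L \<in> snd (lab ?G (ren x)) \<inter> fst (lab ?G (ren y))"
  proof (cases "x = a \<or> x = b \<or> y = a \<or> y = b")
    case False
    then show ?thesis using Lin by (simp add: gl_lab)
  next
    case True
    then consider "x = a" | "x = b" | "y = a" | "y = b" by blast
    then show ?thesis
    proof cases
      case 1
      then have yb: "y \<noteq> b" using xy by auto
      have "y \<noteq> a" using 1 xy_ne by simp
      moreover have "?L \<noteq> K" using gl_dist_out[of a y b] xy(1) e yb 1 by simp
      ultimately show ?thesis using Lin 1 yb by (simp add: gl_lab mm)
    next
      case 2
      have "y \<noteq> a" using 2 xy(1) gl_ba by auto
      moreover have "y \<noteq> b" using 2 xy_ne by simp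
      ultimately show ?thesis using Lin 2 gl_ab(3) by (simp add: gl_lab mm)
    next
      case 3
      have "x \<noteq> b" using 3 xy(1) gl_ba by auto
      moreover have "x \<noteq> a" using 3 xy_ne by simp
      ultimately show ?thesis using Lin 3 gl_ab(3) by (simp add: gl_lab mm)
    next
      case 4
      have xa: "x \<noteq> a" using 4 xy by auto
      have "x \<noteq> b" using 4 xy_ne by simp
      moreover have "?L \<noteq> K" using gl_dist_in[of x b a] xy(1) e xa 4 by simp
      ultimately show ?thesis using Lin 4 xa gl_ab(3) by (simp add: gl_lab mm)
    qed
  qed
  then show ?thesis using hsing[OF H E1] by blast
qed

lemma gl_alab:
  assumes xy: "(x, y) \<in> arrs T" "(x, y) \<noteq> (a, b)"
  shows "alab (glue T (a, b)) (ren x, ren y) = alab T (x, y)"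
  using gl_alab_sing[OF xy] by (simp add: alab_def)

lemma gl_no_tri_out:
  assumes "(a, y) \<in> arrs T" "(b, y) \<in> arrs T"
  shows False
proof -
  have ya: "y \<noteq> a" using assms(2) gl_ba by auto
  have yb: "y \<noteq> b" using assms(1) e gl_noloop assms(2) by auto
  let ?M = "alab T (a, y)" and ?N = "alab T (b, y)"
  have M: "?M \<in> t a \<inter> s y" using gl_sing[OF assms(1)] by auto
  have N: "?N \<in> t b \<inter> s y" using gl_sing[OF assms(2)] by auto
  have MK: "?M \<noteq> K" using gl_dist_out[OF assms(1) e yb] .
  have MN: "?M \<noteq> ?N"
  proof
    assume "?M = ?N"
    then have "?M \<in> (t a - {K}) \<inter> t b" using M N MK by auto
    then show False using gl_dj2 by simp
  qed
  let ?m = "mrg (lab T a) (lab T b) K"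
  have mE: "?m \<in> E" using gl_mE by blast
  have yE: "lab T y \<in> E" using gl_labE gl_arr_nodes[OF assms(1)] by blast
  have "?M \<in> snd ?m \<inter> s y" "?N \<in> snd ?m \<inter> s y" using M N MK by (auto simp: mrg_def)
  then have "snd ?m \<inter> s y = {?M}" "snd ?m \<inter> s y = {?N}"
    using hsing[OF H mE yE] by blast+
  then show False using MN by simp
qed

lemma gl_no_tri_in:
  assumes "(x, a) \<in> arrs T" "(x, b) \<in> arrs T"
  shows False
proof -
  have xa: "x \<noteq> a" using assms(1) gl_noloop by auto
  have xb: "x \<noteq> b" using assms(1) gl_ba by auto
  let ?L = "alab T (x, a)" and ?L' = "alab T (x, b)"
  have L: "?L \<in> t x \<inter> s a" using gl_sing[OF assms(1)] by auto
  have L': "?L' \<in> t x \<inter> s b" using gl_sing[OF assms(2)] by auto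
  have LL: "?L \<noteq> ?L'" using gl_dist_out[OF assms(1) assms(2) gl_ab(3)] .
  have xE: "lab T x \<in> E" using gl_labE gl_arr_nodes[OF assms(1)] by blast
  have aE: "lab T a \<in> E" using gl_labE gl_ab by blast
  show False
  proof (cases "?L' = K")
    case True
    have "t x \<inter> s a = {?L}" using gl_sing[OF assms(1)] .
    then have "(t x - {?L}) \<inter> t a = {}" using hmerge[OF H xE aE] by blast
    moreover have "K \<in> t x - {?L}" using L' True LL by auto
    moreover have "K \<in> t a" using gl_K by blast
    ultimately show False by blast
  next
    case False
    let ?m = "mrg (lab T a) (lab T b) K"
    have mE: "?m \<in> E" using gl_mE by blast
    have "?L \<in> t x \<inter> fst ?m" "?L' \<in> t x \<inter> fst ?m" using L L' False by (auto simp: mrg_def)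
    then have "t x \<inter> fst ?m = {?L}" "t x \<inter> fst ?m = {?L'}"
      using hsing[OF H xE mE] by blast+
    then show False using LL by simp
  qed
qed

lemma gl_ren_inj: "inj_on (\<lambda>(x, y). (ren x, ren y)) (arrs T - {(a, b)})"
proof (rule inj_onI)
  fix u v assume u: "u \<in> arrs T - {(a, b)}" and v: "v \<in> arrs T - {(a, b)}"
    and eq: "(\<lambda>(x, y). (ren x, ren y)) u = (\<lambda>(x, y). (ren x, ren y)) v"
  obtain x y where u': "u = (x, y)" by fastforce
  obtain x' y' where v': "v = (x', y')" by fastforce
  have xy: "(x, y) \<in> arrs T" "(x, y) \<noteq> (a, b)" using u u' by auto
  have xy': "(x', y') \<in> arrs T" "(x', y') \<noteq> (a, b)" using v v' by auto
  have rx: "ren x = ren x'" and ry: "ren y = ren y'" using eq u' v' by auto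
  have nl: "x \<noteq> y" "x' \<noteq> y'" using xy(1) xy'(1) gl_noloop by auto
  have ba: "(b, a) \<notin> arrs T" by (rule gl_ba)
  have cx: "x = x' \<or> (x = a \<and> x' = b) \<or> (x = b \<and> x' = a)" using rx by (auto split: if_splits)
  have cy: "y = y' \<or> (y = a \<and> y' = b) \<or> (y = b \<and> y' = a)" using ry by (auto split: if_splits)
  have "x = x' \<and> y = y'"
  proof -
    { assume "x \<noteq> x'"
      then have xx: "(x = a \<and> x' = b) \<or> (x = b \<and> x' = a)" using cx by blast
      have False
      proof (cases "y = y'")
        case True
        then have "y \<noteq> a \<and> y \<noteq> b" using xx xy xy' nl ba by auto
        then show False using xx True xy(1) xy'(1) gl_no_tri_out by blast
      next
        case False
        then have "(y = a \<and> y' = b) \<or> (y = b \<and> y' = a)" using cy by blast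
        then show False using xx xy xy' nl ba by auto
      qed }
    moreover
    { assume xx: "x = x'" "y \<noteq> y'"
      then have yy: "(y = a \<and> y' = b) \<or> (y = b \<and> y' = a)" using cy by blast
      then have "x \<noteq> a \<and> x \<noteq> b" using xx xy xy' nl ba by auto
      then have False using yy xx xy(1) xy'(1) gl_no_tri_in by blast }
    ultimately show ?thesis by blast
  qed
  then show "u = v" using u' v' by simp
qed

lemma gl_ren_noloop: "(x, y) \<in> arrs T - {(a, b)} \<Longrightarrow> ren x \<noteq> ren y"
  using gl_noloop gl_ba by (auto split: if_splits)

lemma gl_rtrancl:
  assumes "(x, y) \<in> (arrs T \<union> (arrs T)\<inverse>)\<^sup>*"
  shows "(ren x, ren y) \<in> (arrs (glue T (a, b)) \<union> (arrs (glue T (a, b)))\<inverse>)\<^sup>*"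
  using assms
proof (induction rule: rtrancl_induct)
  case base then show ?case by simp
next
  case (step y z)
  let ?S = "arrs (glue T (a, b)) \<union> (arrs (glue T (a, b)))\<inverse>"
  have "(ren y, ren z) \<in> ?S\<^sup>*"
  proof (cases "(y, z) = (a, b) \<or> (z, y) = (a, b)")
    case True
    then have "ren y = ren z" by auto
    then show ?thesis by simp
  next
    case False
    then have "(y, z) \<in> arrs T - {(a, b)} \<or> (z, y) \<in> arrs T - {(a, b)}" using step(2) by blast
    then have "(ren y, ren z) \<in> arrs (glue T (a, b)) \<or> (ren z, ren y) \<in> arrs (glue T (a, b))"
      using gl_arrI by blast
    then have "(ren y, ren z) \<in> ?S" by blast
    then show ?thesis by blast
  qed
  with step.IH show ?case by (rule rtrancl_trans)
qed

lemma gl_dtree': "is_dtree (glue T (a, b))"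
proof -
  let ?G = "glue T (a, b)"
  have fN: "finite (nodes T)" using gl_dtree by (simp add: is_dtree_def)
  have fA: "finite (arrs T)" using wft_finite[OF gl_wft fN] .
  have f1: "finite (nodes ?G)" using fN by (simp add: gl_nodes)
  have n1: "nodes ?G \<noteq> {}" using gl_ab by (auto simp: gl_nodes)
  have s1: "arrs ?G \<subseteq> nodes ?G \<times> nodes ?G"
  proof
    fix u assume "u \<in> arrs ?G"
    then obtain x y where xy: "(x, y) \<in> arrs T" "u = (ren x, ren y)" by (rule gl_arrsE)
    then show "u \<in> nodes ?G \<times> nodes ?G" using gl_arr_nodes[OF xy(1)] gl_ab by (auto simp: gl_nodes)
  qed
  have l1: "\<forall>x. (x, x) \<notin> arrs ?G"
  proof (intro allI notI)
    fix x assume "(x, x) \<in> arrs ?G"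
    then obtain u v where uv: "(u, v) \<in> arrs T" "(u, v) \<noteq> (a, b)" "(x, x) = (ren u, ren v)" by (rule gl_arrsE)
    then show False using gl_ren_noloop[of u v] by simp
  qed
  have c1: "\<forall>x\<in>nodes ?G. \<forall>y\<in>nodes ?G. (x, y) \<in> (arrs ?G \<union> (arrs ?G)\<inverse>)\<^sup>*"
  proof (intro ballI)
    fix x y assume "x \<in> nodes ?G" "y \<in> nodes ?G"
    then have xy: "x \<in> nodes T" "y \<in> nodes T" "x \<noteq> b" "y \<noteq> b" by (auto simp: gl_nodes)
    have "(x, y) \<in> (arrs T \<union> (arrs T)\<inverse>)\<^sup>*" using gl_dtree xy unfolding is_dtree_def by blast
    then have "(ren x, ren y) \<in> (arrs ?G \<union> (arrs ?G)\<inverse>)\<^sup>*" by (rule gl_rtrancl)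
    then show "(x, y) \<in> (arrs ?G \<union> (arrs ?G)\<inverse>)\<^sup>*" using xy by simp
  qed
  have "card (arrs ?G) = card (arrs T - {(a, b)})"
    unfolding gl_arrs using card_image[OF gl_ren_inj] .
  also have "\<dots> = card (arrs T) - 1" using e fA by simp
  finally have cA: "card (arrs ?G) = card (arrs T) - 1" .
  have cN: "card (nodes ?G) = card (nodes T) - 1" using gl_ab fN by (simp add: gl_nodes)
  have cT: "card (arrs T) + 1 = card (nodes T)" using gl_dtree by (simp add: is_dtree_def)
  have "card (arrs T) \<ge> 1" using e fA by (metis card_0_eq empty_iff less_one not_le)
  then have c2: "card (arrs ?G) + 1 = card (nodes ?G)" using cA cN cT by simp
  show ?thesis using f1 n1 s1 l1 c1 c2 by (simp add: is_dtree_def)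
qed

lemma gl_path: "is_path E (glue T (a, b))"
proof -
  let ?G = "glue T (a, b)"
  have l1: "\<forall>x\<in>nodes ?G. lab ?G x \<in> E" using gl_labE' by blast
  have l2: "\<forall>u\<in>arrs ?G. \<exists>K. snd (lab ?G (fst u)) \<inter> fst (lab ?G (snd u)) = {K}"
  proof
    fix u assume "u \<in> arrs ?G"
    then obtain x y where xy: "(x, y) \<in> arrs T" "(x, y) \<noteq> (a, b)" "u = (ren x, ren y)" by (rule gl_arrsE)
    then show "\<exists>K. snd (lab ?G (fst u)) \<inter> fst (lab ?G (snd u)) = {K}"
      using gl_alab_sing[of x y] by auto
  qed
  have l3: "\<forall>u\<in>arrs ?G. \<forall>u'\<in>arrs ?G. u \<noteq> u' \<and> (fst u = fst u' \<or> snd u = snd u')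
            \<longrightarrow> alab ?G u \<noteq> alab ?G u'"
  proof (intro ballI impI)
    fix u u' assume uG: "u \<in> arrs ?G" "u' \<in> arrs ?G" and c: "u \<noteq> u' \<and> (fst u = fst u' \<or> snd u = snd u')"
    obtain x y where xy0: "(x, y) \<in> arrs T" "(x, y) \<noteq> (a, b)" "u = (ren x, ren y)" using uG(1) by (rule gl_arrsE)
    obtain x' y' where xy0': "(x', y') \<in> arrs T" "(x', y') \<noteq> (a, b)" "u' = (ren x', ren y')" using uG(2) by (rule gl_arrsE)
    have xy: "(x, y) \<in> arrs T - {(a, b)}" "u = (ren x, ren y)" using xy0 by auto
    have xy': "(x', y') \<in> arrs T - {(a, b)}" "u' = (ren x', ren y')" using xy0' by auto
    have al: "alab ?G u = alab T (x, y)" "alab ?G u' = alab T (x', y')"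
      using gl_alab xy xy' by auto
    have ne: "(x, y) \<noteq> (x', y')" using c xy xy' by auto
    have A: "(x, y) \<in> arrs T" "(x', y') \<in> arrs T" "(x, y) \<noteq> (a, b)" "(x', y') \<noteq> (a, b)" using xy xy' by auto
    have Lx: "alab T (x, y) \<in> t x \<inter> s y" using gl_sing[OF A(1)] by auto
    have Lx': "alab T (x', y') \<in> t x' \<inter> s y'" using gl_sing[OF A(2)] by auto
    have dm: "s a \<inter> (s b - {K}) = {}" "(t a - {K}) \<inter> t b = {}" using gl_dj1 gl_dj2 by auto
    show "alab ?G u \<noteq> alab ?G u'"
      unfolding al
    proof
      assume eqL: "alab T (x, y) = alab T (x', y')"
      have "fst u = fst u' \<or> snd u = snd u'" using c by simp
      then show False
      proof
        assume "fst u = fst u'"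
        then have rx: "ren x = ren x'" using xy xy' by simp
        show False
        proof (cases "x = x'")
          case True
          then have "y \<noteq> y'" using ne by simp
          then show False using gl_dist_out[of x y y'] A True eqL by simp
        next
          case False
          then have "(x = a \<and> x' = b) \<or> (x = b \<and> x' = a)" using rx by (auto split: if_splits)
          then show False
          proof
            assume xa: "x = a \<and> x' = b"
            then have "y \<noteq> b" using A by auto
            then have "alab T (x, y) \<noteq> K" using gl_dist_out[of a y b] A e xa by simp
            then have "alab T (x, y) \<in> (t a - {K}) \<inter> t b" using Lx Lx' xa eqL by auto
            then show False using dm(2) by simp
          next
            assume xa: "x = b \<and> x' = a"
            then have "y' \<noteq> b" using A by auto
            then have "alab T (x', y') \<noteq> K" using gl_dist_out[of a y' b] A e xa by simp
            then have "alab T (x', y') \<in> (t a - {K}) \<inter> t b" using Lx Lx' xa eqL by auto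
            then show False using dm(2) by simp
          qed
        qed
      next
        assume "snd u = snd u'"
        then have ry: "ren y = ren y'" using xy xy' by simp
        show False
        proof (cases "y = y'")
          case True
          then have "x \<noteq> x'" using ne by simp
          then show False using gl_dist_in[of x y x'] A True eqL by simp
        next
          case False
          then have "(y = a \<and> y' = b) \<or> (y = b \<and> y' = a)" using ry by (auto split: if_splits)
          then show False
          proof
            assume ya: "y = a \<and> y' = b"
            then have "x' \<noteq> a" using A by auto
            then have "alab T (x', y') \<noteq> K" using gl_dist_in[of x' b a] A e ya by simp
            then have "alab T (x', y') \<in> s a \<inter> (s b - {K})" using Lx Lx' ya eqL by auto
            then show False using dm(1) by simp
          next
            assume ya: "y = b \<and> y' = a"
            then have "x \<noteq> a" using A by auto
            then have "alab T (x, y) \<noteq> K" using gl_dist_in[of x b a] A e ya by simp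
            then have "alab T (x, y) \<in> s a \<inter> (s b - {K})" using Lx Lx' ya eqL by auto
            then show False using dm(1) by simp
          qed
        qed
      qed
    qed
  qed
  show ?thesis using gl_dtree' l1 l2 l3 by (simp add: is_path_def)
qed

end


lemma glue_nodes: "nodes (glue T (a, b)) = nodes T - {b}"
  by (simp add: glue_def Let_def)

lemma glue_arrs: "arrs (glue T (a, b)) = (\<lambda>(x, y). (if x = b then a else x, if y = b then a else y)) ` (arrs T - {(a, b)})"
  by (simp add: glue_def Let_def)

lemma glue_lab: "lab (glue T (a, b)) z = (if z = a then mrg (lab T a) (lab T b) (alab T (a, b)) else lab T z)"
  by (simp add: glue_def Let_def mrg_def)

lemma glue_wft:
  assumes "is_dtree T" "(a, b) \<in> arrs T"
  shows "wft (glue T (a, b))"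
proof -
  have w: "wft T" using assms(1) by (rule dtree_wf)
  have ab: "a \<in> nodes T" "a \<noteq> b" using assms w by (auto simp: wft_def is_dtree_def)
  show ?thesis unfolding wft_def
  proof
    fix u assume "u \<in> arrs (glue T (a, b))"
    then obtain w0 where w0: "w0 \<in> arrs T - {(a, b)}"
      "u = (\<lambda>(x, y). (if x = b then a else x, if y = b then a else y)) w0"
      unfolding glue_arrs by (rule imageE)
    have "fst w0 \<in> nodes T" "snd w0 \<in> nodes T" using w0(1) w by (auto simp: wft_def)
    then show "u \<in> nodes (glue T (a, b)) \<times> nodes (glue T (a, b))"
      using w0(2) ab by (auto simp: glue_nodes case_prod_beta)
  qed
qed

lemma glue_iso:
  assumes d: "is_dtree T" and f: "iso_by f T T'" and e: "(a, b) \<in> arrs T"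
  shows "iso_by f (glue T (a, b)) (glue T' (f a, f b))"
proof -
  have w: "wft T" using d by (rule dtree_wf)
  have abn: "a \<in> nodes T" "b \<in> nodes T" using e w by (auto simp: wft_def)
  have inj: "inj_on f (nodes T)" using iso_inj[OF f] .
  have bij: "bij_betw f (nodes T) (nodes T')" using f by (simp add: iso_by_def)
  have nodes: "bij_betw f (nodes T - {b}) (nodes T' - {f b})"
  proof -
    have "inj_on f (nodes T - {b})" using inj by (rule inj_on_subset) auto
    moreover have "f ` (nodes T - {b}) = f ` nodes T - f ` {b}"
      by (rule inj_on_image_set_diff[OF inj]) (use abn in auto)
    ultimately show ?thesis using bij by (simp add: bij_betw_def)
  qed
  let ?ff = "\<lambda>(x, y). (f x, f y)"
  let ?ren = "\<lambda>(x, y). (if x = b then a else x, if y = b then a else y)"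
  let ?ren' = "\<lambda>(x, y). (if x = f b then f a else x, if y = f b then f a else y)"
  have injA: "inj_on ?ff (arrs T)" using inj w by (auto simp: inj_on_def wft_def)
  have A: "arrs T' = ?ff ` arrs T" using f by (simp add: iso_by_def)
  have A1: "arrs T' - {(f a, f b)} = ?ff ` (arrs T - {(a, b)})"
  proof -
    have "?ff ` (arrs T - {(a, b)}) = ?ff ` arrs T - ?ff ` {(a, b)}"
      using injA e by (intro inj_on_image_set_diff) auto
    then show ?thesis using A by simp
  qed
  have comm: "?ren' (?ff u) = ?ff (?ren u)" if "u \<in> arrs T" for u
  proof -
    obtain x y where u: "u = (x, y)" by fastforce
    have "x \<in> nodes T" "y \<in> nodes T" using that u w by (auto simp: wft_def)
    then have "f x = f b \<longleftrightarrow> x = b" "f y = f b \<longleftrightarrow> y = b"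
      using inj abn by (auto dest: inj_onD)
    then show ?thesis using u by auto
  qed
  have arrs: "arrs (glue T' (f a, f b)) = ?ff ` arrs (glue T (a, b))"
  proof -
    have "arrs (glue T' (f a, f b)) = ?ren' ` ?ff ` (arrs T - {(a, b)})"
      by (simp only: glue_arrs A1)
    also have "\<dots> = (\<lambda>u. ?ren' (?ff u)) ` (arrs T - {(a, b)})" by (simp add: image_image)
    also have "\<dots> = (\<lambda>u. ?ff (?ren u)) ` (arrs T - {(a, b)})"
      by (rule image_cong[OF refl]) (use comm in auto)
    also have "\<dots> = ?ff ` arrs (glue T (a, b))" by (simp only: glue_arrs image_image)
    finally show ?thesis .
  qed
  have labs: "\<forall>x\<in>nodes (glue T (a, b)). lab (glue T' (f a, f b)) (f x) = lab (glue T (a, b)) x"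
  proof
    fix x assume "x \<in> nodes (glue T (a, b))"
    then have x: "x \<in> nodes T" "x \<noteq> b" by (auto simp: glue_nodes)
    have xa: "f x = f a \<longleftrightarrow> x = a" using inj x abn by (auto dest: inj_onD)
    show "lab (glue T' (f a, f b)) (f x) = lab (glue T (a, b)) x"
      using xa iso_lab[OF f x(1)] iso_lab[OF f abn(1)] iso_lab[OF f abn(2)] iso_alab[OF f abn]
      by (simp add: glue_lab)
  qed
  show ?thesis using nodes arrs labs by (simp add: iso_by_def glue_nodes)
qed

lemma bdry_tree_iso:
  assumes d: "is_dtree T" and f: "iso_by f T T'"
  shows "bdry_tree T' = bdry_tree T"
proof -
  have w: "wft T" using d by (rule dtree_wf)
  let ?ff = "\<lambda>(x, y). (f x, f y)"
  have injA: "inj_on ?ff (arrs T)" using iso_inj[OF f] w by (auto simp: inj_on_def wft_def)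
  have A: "arrs T' = ?ff ` arrs T" using f by (simp add: iso_by_def)
  have cl: "cls (glue T' (?ff u)) = cls (glue T u)" if "u \<in> arrs T" for u
  proof -
    obtain x y where u: "u = (x, y)" by fastforce
    have "iso_by f (glue T (x, y)) (glue T' (f x, f y))" using glue_iso[OF d f] that u by simp
    then have "ptree_iso (glue T (x, y)) (glue T' (f x, f y))" unfolding ptree_iso_iff by blast
    moreover have "wft (glue T (x, y))" using glue_wft[OF d] that u by simp
    ultimately show ?thesis using cls_eq_iff u by fastforce
  qed
  have "card {u' \<in> arrs T'. cls (glue T' u') = C} = card {u \<in> arrs T. cls (glue T u) = C}" for C
  proof -
    have "{u' \<in> arrs T'. cls (glue T' u') = C} = ?ff ` {u \<in> arrs T. cls (glue T u) = C}"
      unfolding A using cl by auto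
    moreover have "inj_on ?ff {u \<in> arrs T. cls (glue T u) = C}" using injA by (rule inj_on_subset) auto
    ultimately show ?thesis by (simp add: card_image)
  qed
  then show ?thesis by (simp add: bdry_tree_def f2sum_def)
qed

section \<open>Length two paths\<close>

lemma len2_alab: "alab (len2 e1 e2) (0, 1) = the_elem (snd e1 \<inter> fst e2)"
  by (simp add: alab_def len2_def)

lemma psrc_len2: "psrc (len2 e1 e2) = fst e1 \<union> (fst e2 - {the_elem (snd e1 \<inter> fst e2)})"
proof -
  have "psrc (len2 e1 e2) = (fst e1 - {}) \<union> (fst e2 - {alab (len2 e1 e2) (0, 1)})"
    unfolding psrc_def by (auto simp: len2_def)
  then show ?thesis by (simp add: alab_def len2_def)
qed

lemma ptgt_len2: "ptgt (len2 e1 e2) = (snd e1 - {the_elem (snd e1 \<inter> fst e2)}) \<union> snd e2"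
proof -
  have "ptgt (len2 e1 e2) = (snd e1 - {alab (len2 e1 e2) (0, 1)}) \<union> (snd e2 - {})"
    unfolding ptgt_def by (auto simp: len2_def)
  then show ?thesis by (simp add: alab_def len2_def)
qed

lemma len2_path:
  assumes "e1 \<in> E" "e2 \<in> E" "snd e1 \<inter> fst e2 = {K}"
  shows "is_path E (len2 e1 e2)"
proof -
  have d: "is_dtree (len2 e1 e2)"
  proof -
    have c: "((0::nat), (1::nat)) \<in> ({(0, 1)} \<union> {(0, 1)}\<inverse>)\<^sup>*" "((1::nat), (0::nat)) \<in> ({(0, 1)} \<union> {(0, 1)}\<inverse>)\<^sup>*"
      by blast+
    show ?thesis unfolding is_dtree_def len2_def using c by auto
  qed
  show ?thesis unfolding is_path_def using d assms by (auto simp: len2_def)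
qed

section \<open>Refinement then gluing\<close>

lemma refine_nodes: "nodes (refine T v e1 e2) = insert (Suc (Max (nodes T))) (nodes T)"
  by (simp add: refine_def Let_def)

lemma refine_lab: "lab (refine T v e1 e2) = (lab T)(v := e1, Suc (Max (nodes T)) := e2)"
  by (simp add: refine_def Let_def)

lemma refine_arrs: "arrs (refine T v e1 e2) =
   {e \<in> arrs T. fst e \<noteq> v \<and> snd e \<noteq> v} \<union> {(v, Suc (Max (nodes T)))}
   \<union> {(c, if alab T (c, v) \<in> fst e1 then v else Suc (Max (nodes T))) | c. (c, v) \<in> arrs T}
   \<union> {(if alab T (v, c) \<in> snd e2 then Suc (Max (nodes T)) else v, c) | c. (v, c) \<in> arrs T}"
  by (simp add: refine_def Let_def)

lemma fresh_notin: "finite N \<Longrightarrow> Suc (Max N) \<notin> N"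
  using Max_ge not_less_eq_eq by blast

lemma rt_lab:
  assumes "(v, e1, e2) \<in> refine_terms E T"
  shows "lab T v = mrg e1 e2 (the_elem (snd e1 \<inter> fst e2))"
  using assms by (simp add: refine_terms_def psrc_len2 ptgt_len2 mrg_def prod_eq_iff)

lemma refine_glue:
  assumes d: "is_dtree T" and v: "v \<in> nodes T" and lv: "lab T v = mrg e1 e2 (the_elem (snd e1 \<inter> fst e2))"
  shows "iso_by id T (glue (refine T v e1 e2) (v, Suc (Max (nodes T))))"
proof -
  let ?y = "Suc (Max (nodes T))"
  let ?R = "refine T v e1 e2"
  let ?G = "glue ?R (v, ?y)"
  have w: "wft T" using d by (rule dtree_wf)
  have fN: "finite (nodes T)" using d by (simp add: is_dtree_def)
  have yn: "?y \<notin> nodes T" using fresh_notin[OF fN] .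
  have vy: "v \<noteq> ?y" using v yn by auto
  have noloop: "\<And>x. (x, x) \<notin> arrs T" using d by (simp add: is_dtree_def)
  have an: "\<And>x z. (x, z) \<in> arrs T \<Longrightarrow> x \<in> nodes T \<and> z \<in> nodes T" using w by (auto simp: wft_def)
  have N: "nodes ?G = nodes T" using yn by (simp add: glue_nodes refine_nodes)
  let ?ren = "\<lambda>(x, z). (if x = ?y then v else x, if z = ?y then v else z)"
  have A: "arrs ?G = arrs T"
  proof -
    have "arrs ?G = ?ren ` (arrs ?R - {(v, ?y)})" by (rule glue_arrs)
    also have "\<dots> = arrs T"
    proof
      show "?ren ` (arrs ?R - {(v, ?y)}) \<subseteq> arrs T"
      proof
        fix u assume "u \<in> ?ren ` (arrs ?R - {(v, ?y)})"
        then obtain w0 where w0: "w0 \<in> arrs ?R" "w0 \<noteq> (v, ?y)" "u = ?ren w0" by blast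
        from w0(1) consider (a1) "w0 \<in> arrs T" "fst w0 \<noteq> v" "snd w0 \<noteq> v"
          | (a2) "w0 = (v, ?y)"
          | (a3) c where "(c, v) \<in> arrs T" "w0 = (c, if alab T (c, v) \<in> fst e1 then v else ?y)"
          | (a4) c where "(v, c) \<in> arrs T" "w0 = (if alab T (v, c) \<in> snd e2 then ?y else v, c)"
          unfolding refine_arrs by blast
        then show "u \<in> arrs T"
        proof cases
          case a1
          then have "fst w0 \<noteq> ?y" "snd w0 \<noteq> ?y" using an[of "fst w0" "snd w0"] yn by auto
          then show ?thesis using a1 w0(3) by (auto simp: case_prod_beta)
        next
          case a2 then show ?thesis using w0 by simp
        next
          case a3
          have "c \<noteq> ?y" using an[OF a3(1)] yn by auto
          then have "u = (c, v)" using a3 w0(3) by auto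
          then show ?thesis using a3 by simp
        next
          case a4
          have "c \<noteq> ?y" using an[OF a4(1)] yn by auto
          then have "u = (v, c)" using a4 w0(3) by auto
          then show ?thesis using a4 by simp
        qed
      qed
    next
      show "arrs T \<subseteq> ?ren ` (arrs ?R - {(v, ?y)})"
      proof
        fix u assume u: "u \<in> arrs T"
        obtain x z where xz: "u = (x, z)" by fastforce
        have xzn: "x \<in> nodes T" "z \<in> nodes T" using an u xz by auto
        then have xy: "x \<noteq> ?y" "z \<noteq> ?y" using yn by auto
        show "u \<in> ?ren ` (arrs ?R - {(v, ?y)})"
        proof (cases "x = v \<or> z = v")
          case False
          then have "u \<in> arrs ?R" "u \<noteq> (v, ?y)" using u xz xy unfolding refine_arrs by auto
          moreover have "?ren u = u" using xz xy by simp
          ultimately show ?thesis by (intro rev_image_eqI[of u]) auto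
        next
          case True
          then show ?thesis
          proof
            assume zv: "z = v"
            let ?w = "(x, if alab T (x, v) \<in> fst e1 then v else ?y)"
            have "?w \<in> arrs ?R" using u xz zv unfolding refine_arrs by blast
            moreover have "?w \<noteq> (v, ?y)" using noloop u xz zv by auto
            moreover have "?ren ?w = u" using xz zv xy by auto
            ultimately show ?thesis by (intro rev_image_eqI[of ?w]) auto
          next
            assume xv: "x = v"
            let ?w = "(if alab T (v, z) \<in> snd e2 then ?y else v, z)"
            have "?w \<in> arrs ?R" using u xz xv unfolding refine_arrs by blast
            moreover have "?w \<noteq> (v, ?y)" using xy by auto
            moreover have "?ren ?w = u" using xz xv xy by auto
            ultimately show ?thesis by (intro rev_image_eqI[of ?w]) auto
          qed
        qed
      qed
    qed
    finally show ?thesis .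
  qed
  have al: "alab ?R (v, ?y) = the_elem (snd e1 \<inter> fst e2)"
    using vy by (simp add: alab_def refine_lab)
  have L: "\<forall>x\<in>nodes T. lab ?G (id x) = lab T x"
  proof
    fix x assume x: "x \<in> nodes T"
    show "lab ?G (id x) = lab T x"
    proof (cases "x = v")
      case True then show ?thesis using lv al vy by (simp add: glue_lab refine_lab)
    next
      case False then have "x \<noteq> ?y" using x yn by auto
      then show ?thesis using False by (simp add: glue_lab refine_lab)
    qed
  qed
  show ?thesis using N A L by (simp add: iso_by_def)
qed


section \<open>Refinement respects isomorphism\<close>

lemma iso_arrE:
  assumes "iso_by g T T'" "u \<in> arrs T'"
  obtains x z where "(x, z) \<in> arrs T" "u = (g x, g z)"
proof -
  from assms obtain w where "w \<in> arrs T" "u = (\<lambda>(a, b). (g a, g b)) w"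
    by (auto simp: iso_by_def)
  then show thesis using that[of "fst w" "snd w"] by (simp add: case_prod_beta)
qed

lemma refine_iso:
  assumes d: "is_dtree T" and d': "is_dtree T'" and g: "iso_by g T T'" and v: "v \<in> nodes T"
  shows "iso_by (\<lambda>x. if x = Suc (Max (nodes T)) then Suc (Max (nodes T')) else g x)
           (refine T v e1 e2) (refine T' (g v) e1 e2)"
proof -
  let ?y = "Suc (Max (nodes T))" and ?y' = "Suc (Max (nodes T'))"
  let ?G = "\<lambda>x. if x = ?y then ?y' else g x"
  let ?GG = "\<lambda>(a, b). (?G a, ?G b)"
  have w: "wft T" using d by (rule dtree_wf)
  have w': "wft T'" using d' by (rule dtree_wf)
  have yn: "?y \<notin> nodes T" using fresh_notin d by (simp add: is_dtree_def)
  have yn': "?y' \<notin> nodes T'" using fresh_notin d' by (simp add: is_dtree_def)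
  have an: "\<And>x z. (x, z) \<in> arrs T \<Longrightarrow> x \<in> nodes T \<and> z \<in> nodes T" using w by (auto simp: wft_def)
  have an': "\<And>x z. (x, z) \<in> arrs T' \<Longrightarrow> x \<in> nodes T' \<and> z \<in> nodes T'" using w' by (auto simp: wft_def)
  have Gn: "\<And>x. x \<in> nodes T \<Longrightarrow> ?G x = g x" using yn by auto
  have gn: "\<And>x. x \<in> nodes T \<Longrightarrow> g x \<in> nodes T'" using iso_node[OF g] .
  have inj: "inj_on g (nodes T)" using iso_inj[OF g] .
  have ginj: "\<And>x z. x \<in> nodes T \<Longrightarrow> z \<in> nodes T \<Longrightarrow> g x = g z \<longleftrightarrow> x = z"
    using inj by (auto dest: inj_onD)
  have gv: "g v \<in> nodes T'" using gn[OF v] .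
  have bijN: "bij_betw g (nodes T) (nodes T')" using g by (simp add: iso_by_def)
  have nodes: "bij_betw ?G (insert ?y (nodes T)) (insert ?y' (nodes T'))"
  proof -
    have "bij_betw ?G (nodes T) (nodes T')"
      using bijN by (rule bij_betw_cong[THEN iffD1, rotated]) (use Gn in auto)
    moreover have "?G ?y = ?y'" by simp
    ultimately have "bij_betw ?G (nodes T \<union> {?y}) (nodes T' \<union> {?G ?y})"
      using yn yn' by (intro notIn_Un_bij_betw) auto
    then show ?thesis by simp
  qed
  have arrT'E: "\<And>u. u \<in> arrs T' \<Longrightarrow> \<exists>x z. (x, z) \<in> arrs T \<and> u = (g x, g z)"
    using iso_arrE[OF g] by metis
  have P1: "?GG ` {u \<in> arrs T. fst u \<noteq> v \<and> snd u \<noteq> v} = {u \<in> arrs T'. fst u \<noteq> g v \<and> snd u \<noteq> g v}"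
  proof
    show "?GG ` {u \<in> arrs T. fst u \<noteq> v \<and> snd u \<noteq> v} \<subseteq> {u \<in> arrs T'. fst u \<noteq> g v \<and> snd u \<noteq> g v}"
    proof
      fix u assume "u \<in> ?GG ` {u \<in> arrs T. fst u \<noteq> v \<and> snd u \<noteq> v}"
      then obtain x z where xz: "(x, z) \<in> arrs T" "x \<noteq> v" "z \<noteq> v" "u = ?GG (x, z)" by auto
      have n: "x \<in> nodes T" "z \<in> nodes T" using an[OF xz(1)] by auto
      then have "u = (g x, g z)" using xz(4) Gn by simp
      moreover have "(g x, g z) \<in> arrs T'" using iso_arr[OF g xz(1)] .
      moreover have "g x \<noteq> g v" "g z \<noteq> g v" using ginj n v xz by auto
      ultimately show "u \<in> {u \<in> arrs T'. fst u \<noteq> g v \<and> snd u \<noteq> g v}" by simp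
    qed
  next
    show "{u \<in> arrs T'. fst u \<noteq> g v \<and> snd u \<noteq> g v} \<subseteq> ?GG ` {u \<in> arrs T. fst u \<noteq> v \<and> snd u \<noteq> v}"
    proof
      fix u assume u: "u \<in> {u \<in> arrs T'. fst u \<noteq> g v \<and> snd u \<noteq> g v}"
      then obtain x z where xz: "(x, z) \<in> arrs T" "u = (g x, g z)" using arrT'E by blast
      have n: "x \<in> nodes T" "z \<in> nodes T" using an[OF xz(1)] by auto
      have "x \<noteq> v" "z \<noteq> v" using u xz by auto
      moreover have "?GG (x, z) = u" using xz n Gn by simp
      ultimately show "u \<in> ?GG ` {u \<in> arrs T. fst u \<noteq> v \<and> snd u \<noteq> v}"
        using xz(1) by (intro rev_image_eqI[of "(x, z)"]) auto
    qed
  qed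
  have P3: "?GG ` {(c, if alab T (c, v) \<in> fst e1 then v else ?y) | c. (c, v) \<in> arrs T}
      = {(c, if alab T' (c, g v) \<in> fst e1 then g v else ?y') | c. (c, g v) \<in> arrs T'}"
  proof
    show "?GG ` {(c, if alab T (c, v) \<in> fst e1 then v else ?y) | c. (c, v) \<in> arrs T}
      \<subseteq> {(c, if alab T' (c, g v) \<in> fst e1 then g v else ?y') | c. (c, g v) \<in> arrs T'}"
    proof
      fix u assume "u \<in> ?GG ` {(c, if alab T (c, v) \<in> fst e1 then v else ?y) | c. (c, v) \<in> arrs T}"
      then obtain c where c: "(c, v) \<in> arrs T" "u = ?GG (c, if alab T (c, v) \<in> fst e1 then v else ?y)" by blast
      have cn: "c \<in> nodes T" using an[OF c(1)] by auto
      have al: "alab T' (g c, g v) = alab T (c, v)" using iso_alab[OF g cn v] .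
      have "u = (g c, if alab T' (g c, g v) \<in> fst e1 then g v else ?y')"
        using c(2) Gn[OF cn] Gn[OF v] al by auto
      moreover have "(g c, g v) \<in> arrs T'" using iso_arr[OF g c(1)] .
      ultimately show "u \<in> {(c, if alab T' (c, g v) \<in> fst e1 then g v else ?y') | c. (c, g v) \<in> arrs T'}"
        by blast
    qed
  next
    show "{(c, if alab T' (c, g v) \<in> fst e1 then g v else ?y') | c. (c, g v) \<in> arrs T'}
      \<subseteq> ?GG ` {(c, if alab T (c, v) \<in> fst e1 then v else ?y) | c. (c, v) \<in> arrs T}"
    proof
      fix u assume "u \<in> {(c, if alab T' (c, g v) \<in> fst e1 then g v else ?y') | c. (c, g v) \<in> arrs T'}"
      then obtain c' where c': "(c', g v) \<in> arrs T'" "u = (c', if alab T' (c', g v) \<in> fst e1 then g v else ?y')"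
        by blast
      obtain x z where xz: "(x, z) \<in> arrs T" "(c', g v) = (g x, g z)" using arrT'E[OF c'(1)] by blast
      have n: "x \<in> nodes T" "z \<in> nodes T" using an[OF xz(1)] by auto
      have zv: "z = v" using xz(2) ginj[OF n(2) v] by simp
      have al: "alab T' (g x, g v) = alab T (x, v)" using iso_alab[OF g n(1) v] .
      have "?GG (x, if alab T (x, v) \<in> fst e1 then v else ?y) = u"
        using c' xz(2) Gn[OF n(1)] Gn[OF v] al by auto
      moreover have "(x, v) \<in> arrs T" using xz(1) zv by simp
      ultimately show "u \<in> ?GG ` {(c, if alab T (c, v) \<in> fst e1 then v else ?y) | c. (c, v) \<in> arrs T}"
        by blast
    qed
  qed
  have P4: "?GG ` {(if alab T (v, c) \<in> snd e2 then ?y else v, c) | c. (v, c) \<in> arrs T}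
      = {(if alab T' (g v, c) \<in> snd e2 then ?y' else g v, c) | c. (g v, c) \<in> arrs T'}"
  proof
    show "?GG ` {(if alab T (v, c) \<in> snd e2 then ?y else v, c) | c. (v, c) \<in> arrs T}
      \<subseteq> {(if alab T' (g v, c) \<in> snd e2 then ?y' else g v, c) | c. (g v, c) \<in> arrs T'}"
    proof
      fix u assume "u \<in> ?GG ` {(if alab T (v, c) \<in> snd e2 then ?y else v, c) | c. (v, c) \<in> arrs T}"
      then obtain c where c: "(v, c) \<in> arrs T" "u = ?GG (if alab T (v, c) \<in> snd e2 then ?y else v, c)" by blast
      have cn: "c \<in> nodes T" using an[OF c(1)] by auto
      have al: "alab T' (g v, g c) = alab T (v, c)" using iso_alab[OF g v cn] .
      have "u = (if alab T' (g v, g c) \<in> snd e2 then ?y' else g v, g c)"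
        using c(2) Gn[OF cn] Gn[OF v] al by auto
      moreover have "(g v, g c) \<in> arrs T'" using iso_arr[OF g c(1)] .
      ultimately show "u \<in> {(if alab T' (g v, c) \<in> snd e2 then ?y' else g v, c) | c. (g v, c) \<in> arrs T'}"
        by blast
    qed
  next
    show "{(if alab T' (g v, c) \<in> snd e2 then ?y' else g v, c) | c. (g v, c) \<in> arrs T'}
      \<subseteq> ?GG ` {(if alab T (v, c) \<in> snd e2 then ?y else v, c) | c. (v, c) \<in> arrs T}"
    proof
      fix u assume "u \<in> {(if alab T' (g v, c) \<in> snd e2 then ?y' else g v, c) | c. (g v, c) \<in> arrs T'}"
      then obtain c' where c': "(g v, c') \<in> arrs T'" "u = (if alab T' (g v, c') \<in> snd e2 then ?y' else g v, c')"
        by blast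
      obtain x z where xz: "(x, z) \<in> arrs T" "(g v, c') = (g x, g z)" using arrT'E[OF c'(1)] by blast
      have n: "x \<in> nodes T" "z \<in> nodes T" using an[OF xz(1)] by auto
      have xv: "x = v" using xz(2) ginj[OF n(1) v] by simp
      have al: "alab T' (g v, g z) = alab T (v, z)" using iso_alab[OF g v n(2)] .
      have "?GG (if alab T (v, z) \<in> snd e2 then ?y else v, z) = u"
        using c' xz(2) Gn[OF n(2)] Gn[OF v] al by auto
      moreover have "(v, z) \<in> arrs T" using xz(1) xv by simp
      ultimately show "u \<in> ?GG ` {(if alab T (v, c) \<in> snd e2 then ?y else v, c) | c. (v, c) \<in> arrs T}"
        by blast
    qed
  qed
  have P2: "?GG ` {(v, ?y)} = {(g v, ?y')}" using Gn[OF v] by simp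
  have arrs: "arrs (refine T' (g v) e1 e2) = ?GG ` arrs (refine T v e1 e2)"
    unfolding refine_arrs image_Un P1 P2 P3 P4 ..
  have labs: "\<forall>x\<in>nodes (refine T v e1 e2). lab (refine T' (g v) e1 e2) (?G x) = lab (refine T v e1 e2) x"
  proof
    fix x assume "x \<in> nodes (refine T v e1 e2)"
    then have x: "x = ?y \<or> x \<in> nodes T" by (simp add: refine_nodes)
    have vy: "v \<noteq> ?y" using v yn by auto
    have gvy: "g v \<noteq> ?y'" using gv yn' by auto
    show "lab (refine T' (g v) e1 e2) (?G x) = lab (refine T v e1 e2) x"
    proof (cases "x = ?y")
      case True then show ?thesis using gvy by (simp add: refine_lab)
    next
      case False
      then have xn: "x \<in> nodes T" using x by simp
      have gxy: "g x \<noteq> ?y'" using gn[OF xn] yn' by auto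
      show ?thesis
      proof (cases "x = v")
        case True then show ?thesis using False vy gvy by (simp add: refine_lab)
      next
        case xv: False
        have "g x \<noteq> g v" using ginj[OF xn v] xv by simp
        then show ?thesis using False xv gxy iso_lab[OF g xn] by (simp add: refine_lab)
      qed
    qed
  qed
  show ?thesis using nodes arrs labs by (simp add: iso_by_def refine_nodes)
qed

section \<open>Gluing then refining\<close>

context
  fixes E :: "'v hedge set" and T :: "'v ptree" and a b :: nat
  assumes H: "is_higraph E" and P: "is_path E T" and e: "(a, b) \<in> arrs T"
begin

lemma glue_refine:
  "iso_by (\<lambda>x. if x = b then Suc (Max (nodes (glue T (a, b)))) else x) T
     (refine (glue T (a, b)) a (lab T a) (lab T b))"
proof -
  let ?G = "glue T (a, b)"
  let ?y = "Suc (Max (nodes ?G))"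
  let ?R = "refine ?G a (lab T a) (lab T b)"
  let ?phi = "\<lambda>x. if x = b then ?y else x"
  let ?ren = "\<lambda>z. if z = b then a else z"
  let ?K = "alab T (a, b)"
  have d: "is_dtree T" using P by (rule path_dtree)
  have w: "wft T" using d by (rule dtree_wf)
  have fN: "finite (nodes T)" using d by (simp add: is_dtree_def)
  have ab: "a \<in> nodes T" "b \<in> nodes T" "a \<noteq> b" using gl_ab[OF H P e] by auto
  have ba: "(b, a) \<notin> arrs T" using gl_ba[OF H P e] .
  have GN: "nodes ?G = nodes T - {b}" by (rule glue_nodes)
  have yn: "?y \<notin> nodes ?G" unfolding GN using fresh_notin[of "nodes T - {b}"] fN by simp
  have yT: "?y \<noteq> a" using yn ab GN by auto
  have an: "\<And>x z. (x, z) \<in> arrs T \<Longrightarrow> x \<in> nodes T \<and> z \<in> nodes T" using w by (auto simp: wft_def)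
  have noloop: "\<And>x. (x, x) \<notin> arrs T" using d by (simp add: is_dtree_def)
  have dG: "is_dtree ?G" using gl_dtree'[OF H P e] .
  have noloopG: "\<And>x. (x, x) \<notin> arrs ?G" using dG by (simp add: is_dtree_def)
  have dj1: "fst (lab T a) \<inter> (fst (lab T b) - {?K}) = {}" using gl_dj1[OF H P e] .
  have dj2: "(snd (lab T a) - {?K}) \<inter> snd (lab T b) = {}" using gl_dj2[OF H P e] .
  have sing: "\<And>x z. (x, z) \<in> arrs T \<Longrightarrow> snd (lab T x) \<inter> fst (lab T z) = {alab T (x, z)}"
    using gl_sing[OF H P e] .
  have galab: "\<And>x z. (x, z) \<in> arrs T \<Longrightarrow> (x, z) \<noteq> (a, b) \<Longrightarrow> alab ?G (?ren x, ?ren z) = alab T (x, z)"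
    using gl_alab[OF H P e] by blast
  have garrI: "\<And>x z. (x, z) \<in> arrs T \<Longrightarrow> (x, z) \<noteq> (a, b) \<Longrightarrow> (?ren x, ?ren z) \<in> arrs ?G"
    using gl_arrI[OF H P e] by blast
  have garrE: "\<And>u. u \<in> arrs ?G \<Longrightarrow> \<exists>x z. (x, z) \<in> arrs T \<and> (x, z) \<noteq> (a, b) \<and> u = (?ren x, ?ren z)"
    using gl_arrsE[OF H P e] by metis
  have dout: "\<And>z. (a, z) \<in> arrs T \<Longrightarrow> z \<noteq> b \<Longrightarrow> alab T (a, z) \<noteq> ?K"
    using gl_dist_out[OF H P e] e by blast
  have din: "\<And>x. (x, b) \<in> arrs T \<Longrightarrow> x \<noteq> a \<Longrightarrow> alab T (x, b) \<noteq> ?K"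
    using gl_dist_in[OF H P e] e by blast
  have in_a: "\<And>x. (x, a) \<in> arrs T \<Longrightarrow> alab T (x, a) \<in> fst (lab T a)" using sing by blast
  have in_b: "\<And>x. (x, b) \<in> arrs T \<Longrightarrow> x \<noteq> a \<Longrightarrow> alab T (x, b) \<notin> fst (lab T a)"
  proof -
    fix x assume "(x, b) \<in> arrs T" "x \<noteq> a"
    then have "alab T (x, b) \<in> fst (lab T b) - {?K}" using sing din by blast
    then show "alab T (x, b) \<notin> fst (lab T a)" using dj1 by blast
  qed
  have out_b: "\<And>z. (b, z) \<in> arrs T \<Longrightarrow> alab T (b, z) \<in> snd (lab T b)" using sing by blast
  have out_a: "\<And>z. (a, z) \<in> arrs T \<Longrightarrow> z \<noteq> b \<Longrightarrow> alab T (a, z) \<notin> snd (lab T b)"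
  proof -
    fix z assume "(a, z) \<in> arrs T" "z \<noteq> b"
    then have "alab T (a, z) \<in> snd (lab T a) - {?K}" using sing dout by blast
    then show "alab T (a, z) \<notin> snd (lab T b)" using dj2 by blast
  qed
  have RA: "arrs ?R = {u \<in> arrs ?G. fst u \<noteq> a \<and> snd u \<noteq> a} \<union> {(a, ?y)}
     \<union> {(c, if alab ?G (c, a) \<in> fst (lab T a) then a else ?y) | c. (c, a) \<in> arrs ?G}
     \<union> {(if alab ?G (a, c) \<in> snd (lab T b) then ?y else a, c) | c. (a, c) \<in> arrs ?G}"
    by (rule refine_arrs)
  have sup: "(\<lambda>(x, z). (?phi x, ?phi z)) ` arrs T \<subseteq> arrs ?R"
  proof
    fix u assume "u \<in> (\<lambda>(x, z). (?phi x, ?phi z)) ` arrs T"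
    then obtain x z where xz: "(x, z) \<in> arrs T" "u = (?phi x, ?phi z)" by auto
    have xzne: "x \<noteq> z" using noloop xz(1) by auto
    show "u \<in> arrs ?R"
    proof (cases "(x, z) = (a, b)")
      case True then show ?thesis using xz(2) ab RA by auto
    next
      case ne: False
      have Gxz: "(?ren x, ?ren z) \<in> arrs ?G" using garrI[OF xz(1) ne] .
      have Gl: "alab ?G (?ren x, ?ren z) = alab T (x, z)" using galab[OF xz(1) ne] .
      consider (n) "x \<noteq> a" "x \<noteq> b" "z \<noteq> a" "z \<noteq> b"
        | (za) "z = a" | (zb) "z = b" | (xa) "x = a" | (xb) "x = b" by blast
      then show ?thesis
      proof cases
        case n then show ?thesis using Gxz xz(2) RA by auto
      next
        case za
        then have x: "x \<noteq> a" "x \<noteq> b" using xzne xz(1) ba by auto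
        have "alab ?G (x, a) \<in> fst (lab T a)" using Gl in_a xz(1) za x ab by auto
        moreover have "(x, a) \<in> arrs ?G" using Gxz za x ab by auto
        ultimately show ?thesis using xz(2) za x ab RA by auto
      next
        case zb
        then have x: "x \<noteq> a" "x \<noteq> b" using ne xzne by auto
        have "alab ?G (x, a) \<notin> fst (lab T a)" using Gl in_b xz(1) zb x by auto
        moreover have "(x, a) \<in> arrs ?G" using Gxz zb x by auto
        ultimately show ?thesis using xz(2) zb x ab RA by auto
      next
        case xa
        then have z: "z \<noteq> a" "z \<noteq> b" using ne xzne by auto
        have "alab ?G (a, z) \<notin> snd (lab T b)" using Gl out_a xz(1) xa z by auto
        moreover have "(a, z) \<in> arrs ?G" using Gxz xa z by auto
        ultimately show ?thesis using xz(2) xa z ab RA by auto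
      next
        case xb
        then have z: "z \<noteq> a" "z \<noteq> b" using xzne xz(1) ba by auto
        have "alab ?G (a, z) \<in> snd (lab T b)" using Gl out_b xz(1) xb z ab by auto
        moreover have "(a, z) \<in> arrs ?G" using Gxz xb z ab by auto
        ultimately show ?thesis using xz(2) xb z ab RA by auto
      qed
    qed
  qed
  have sub: "arrs ?R \<subseteq> (\<lambda>(x, z). (?phi x, ?phi z)) ` arrs T"
  proof
    fix u assume "u \<in> arrs ?R"
    then consider (p1) "u \<in> arrs ?G" "fst u \<noteq> a" "snd u \<noteq> a"
      | (p2) "u = (a, ?y)"
      | (p3) c where "(c, a) \<in> arrs ?G" "u = (c, if alab ?G (c, a) \<in> fst (lab T a) then a else ?y)"
      | (p4) c where "(a, c) \<in> arrs ?G" "u = (if alab ?G (a, c) \<in> snd (lab T b) then ?y else a, c)"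
      unfolding RA by blast
    then show "u \<in> (\<lambda>(x, z). (?phi x, ?phi z)) ` arrs T"
    proof cases
      case p1
      obtain x z where xz: "(x, z) \<in> arrs T" "(x, z) \<noteq> (a, b)" "u = (?ren x, ?ren z)" using garrE[OF p1(1)] by blast
      have "x \<noteq> a" "x \<noteq> b" "z \<noteq> a" "z \<noteq> b" using p1 xz(3) by (auto split: if_splits)
      then have "u = (?phi x, ?phi z)" using xz(3) by simp
      then show ?thesis using xz(1) by (intro rev_image_eqI[of "(x, z)"]) auto
    next
      case p2
      then have "u = (?phi a, ?phi b)" using ab by simp
      then show ?thesis using e by (intro rev_image_eqI[of "(a, b)"]) auto
    next
      case p3
      obtain x z where xz: "(x, z) \<in> arrs T" "(x, z) \<noteq> (a, b)" "(c, a) = (?ren x, ?ren z)" using garrE[OF p3(1)] by blast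
      have ca: "c \<noteq> a" using noloopG p3(1) by auto
      then have x: "x \<noteq> a" "x \<noteq> b" "c = x" using xz(3) by (auto split: if_splits)
      have z: "z = a \<or> z = b" using xz(3) by (auto split: if_splits)
      have Gl: "alab ?G (c, a) = alab T (x, z)" using galab[OF xz(1,2)] xz(3) by simp
      show ?thesis
      proof (cases "z = a")
        case True
        then have "u = (?phi x, ?phi z)" using p3(2) Gl in_a xz(1) x ab by auto
        then show ?thesis using xz(1) by (intro rev_image_eqI[of "(x, z)"]) auto
      next
        case False
        then have zb: "z = b" using z by simp
        then have "u = (?phi x, ?phi z)" using p3(2) Gl in_b xz(1) x by auto
        then show ?thesis using xz(1) by (intro rev_image_eqI[of "(x, z)"]) auto
      qed
    next
      case p4
      obtain x z where xz: "(x, z) \<in> arrs T" "(x, z) \<noteq> (a, b)" "(a, c) = (?ren x, ?ren z)" using garrE[OF p4(1)] by blast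
      have ca: "c \<noteq> a" using noloopG p4(1) by auto
      then have z: "z \<noteq> a" "z \<noteq> b" "c = z" using xz(3) by (auto split: if_splits)
      have x: "x = a \<or> x = b" using xz(3) by (auto split: if_splits)
      have Gl: "alab ?G (a, c) = alab T (x, z)" using galab[OF xz(1,2)] xz(3) by simp
      show ?thesis
      proof (cases "x = a")
        case True
        then have "u = (?phi x, ?phi z)" using p4(2) Gl out_a xz(1) z ab by auto
        then show ?thesis using xz(1) by (intro rev_image_eqI[of "(x, z)"]) auto
      next
        case False
        then have xb: "x = b" using x by simp
        then have "u = (?phi x, ?phi z)" using p4(2) Gl out_b xz(1) z by auto
        then show ?thesis using xz(1) by (intro rev_image_eqI[of "(x, z)"]) auto
      qed
    qed
  qed
  have arrs: "arrs ?R = (\<lambda>(x, z). (?phi x, ?phi z)) ` arrs T" using sup sub by blast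
  have nodes: "bij_betw ?phi (nodes T) (nodes ?R)"
  proof -
    have "bij_betw id (nodes T - {b}) (nodes T - {b})" by simp
    then have "bij_betw ?phi (nodes T - {b}) (nodes T - {b})"
      by (rule bij_betw_cong[THEN iffD1, rotated]) auto
    then have "bij_betw ?phi ((nodes T - {b}) \<union> {b}) ((nodes T - {b}) \<union> {?phi b})"
      using yn GN by (intro notIn_Un_bij_betw) auto
    moreover have "(nodes T - {b}) \<union> {b} = nodes T" using ab by auto
    moreover have "nodes ?R = (nodes T - {b}) \<union> {?phi b}" using GN by (auto simp: refine_nodes)
    ultimately show ?thesis by simp
  qed
  have labs: "\<forall>x\<in>nodes T. lab ?R (?phi x) = lab T x"
  proof
    fix x assume x: "x \<in> nodes T"
    show "lab ?R (?phi x) = lab T x"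
    proof (cases "x = b")
      case True then show ?thesis by (simp add: refine_lab)
    next
      case False
      then have xy: "x \<noteq> ?y" using x yn GN by auto
      show ?thesis
      proof (cases "x = a")
        case True then show ?thesis using yT False by (simp add: refine_lab)
      next
        case False then show ?thesis using xy \<open>x \<noteq> b\<close> by (simp add: refine_lab glue_lab)
      qed
    qed
  qed
  show ?thesis using nodes arrs labs by (simp add: iso_by_def)
qed

end


section \<open>Duality between gluing and refining\<close>

lemma iso_of_cls:
  assumes "wft A" "cls A = cls B"
  obtains f where "iso_by f A B"
  using assms cls_eq_iff ptree_iso_iff by metis

lemma cls_of_iso:
  assumes "wft A" "iso_by f A B"
  shows "cls A = cls B"
  using assms cls_eq_iff ptree_iso_iff by metis

lemma duality_count:
  assumes H: "is_higraph E" and Ps: "is_path E \<sigma>" and Pr: "is_path E \<rho>"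
  shows "card {e\<in>arrs \<sigma>. cls (glue \<sigma> e) = cls \<rho>}
       = card {t\<in>refine_terms E \<rho>. cls ((\<lambda>(v, e1, e2). refine \<rho> v e1 e2) t) = cls \<sigma>}"
proof -
  let ?S1 = "{e\<in>arrs \<sigma>. cls (glue \<sigma> e) = cls \<rho>}"
  let ?S2 = "{t\<in>refine_terms E \<rho>. cls ((\<lambda>(v, e1, e2). refine \<rho> v e1 e2) t) = cls \<sigma>}"
  have ds: "is_dtree \<sigma>" using Ps by (rule path_dtree)
  have dr: "is_dtree \<rho>" using Pr by (rule path_dtree)
  have ws: "wft \<sigma>" using ds by (rule dtree_wf)
  have wr: "wft \<rho>" using dr by (rule dtree_wf)
  have fNs: "finite (nodes \<sigma>)" using ds by (simp add: is_dtree_def)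
  have fNr: "finite (nodes \<rho>)" using dr by (simp add: is_dtree_def)
  let ?yr = "Suc (Max (nodes \<rho>))"
  have yrn: "?yr \<notin> nodes \<rho>" using fresh_notin[OF fNr] .
  define gs where "gs e = (SOME g. iso_by g (glue \<sigma> e) \<rho>)" for e
  have gs: "iso_by (gs e) (glue \<sigma> e) \<rho>" if "e \<in> ?S1" for e
  proof -
    obtain a b where e: "e = (a, b)" by fastforce
    have "(a, b) \<in> arrs \<sigma>" using that e by simp
    then have w: "wft (glue \<sigma> (a, b))" using glue_wft[OF ds] by simp
    have "cls (glue \<sigma> (a, b)) = cls \<rho>" using that e by simp
    then obtain g where "iso_by g (glue \<sigma> (a, b)) \<rho>" using iso_of_cls[OF w] by blast
    then have "iso_by g (glue \<sigma> e) \<rho>" using e by simp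
    then show ?thesis unfolding gs_def by (rule someI[where P="\<lambda>g. iso_by g (glue \<sigma> e) \<rho>"])
  qed
  define Phi where "Phi e = (gs e (fst e), lab \<sigma> (fst e), lab \<sigma> (snd e))" for e
  have chi: "iso_by (\<lambda>x. if x = snd e then ?yr else gs e x) \<sigma>
               (refine \<rho> (gs e (fst e)) (lab \<sigma> (fst e)) (lab \<sigma> (snd e)))" if "e \<in> ?S1" for e
  proof -
    obtain a b where e: "e = (a, b)" by fastforce
    have ab: "(a, b) \<in> arrs \<sigma>" using that e by simp
    let ?G = "glue \<sigma> (a, b)"
    let ?y0 = "Suc (Max (nodes ?G))"
    have dG: "is_dtree ?G" using gl_dtree'[OF H Ps ab] .
    have aG: "a \<in> nodes ?G" using gl_ab[OF H Ps ab] by (simp add: glue_nodes)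
    have fNG: "finite (nodes ?G)" using dG by (simp add: is_dtree_def)
    have y0n: "?y0 \<notin> nodes ?G" using fresh_notin[OF fNG] .
    have i1: "iso_by (\<lambda>x. if x = b then ?y0 else x) \<sigma> (refine ?G a (lab \<sigma> a) (lab \<sigma> b))"
      using glue_refine[OF H Ps ab] .
    have i2: "iso_by (\<lambda>x. if x = ?y0 then ?yr else gs e x) (refine ?G a (lab \<sigma> a) (lab \<sigma> b))
                (refine \<rho> (gs e a) (lab \<sigma> a) (lab \<sigma> b))"
      unfolding e using refine_iso[OF dG dr gs[OF that, unfolded e] aG, of "lab \<sigma> a" "lab \<sigma> b"] by simp
    have i3: "iso_by ((\<lambda>x. if x = ?y0 then ?yr else gs e x) \<circ> (\<lambda>x. if x = b then ?y0 else x)) \<sigma>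
                (refine \<rho> (gs e a) (lab \<sigma> a) (lab \<sigma> b))"
      using iso_trans[OF i1 i2] .
    have eq: "\<forall>x\<in>nodes \<sigma>. ((\<lambda>x. if x = ?y0 then ?yr else gs e x) \<circ> (\<lambda>x. if x = b then ?y0 else x)) x
                 = (if x = snd e then ?yr else gs e x)"
    proof
      fix x assume x: "x \<in> nodes \<sigma>"
      show "((\<lambda>x. if x = ?y0 then ?yr else gs e x) \<circ> (\<lambda>x. if x = b then ?y0 else x)) x
                 = (if x = snd e then ?yr else gs e x)"
      proof (cases "x = b")
        case True then show ?thesis using e by simp
      next
        case False
        then have "x \<in> nodes ?G" using x by (simp add: glue_nodes)
        then have "x \<noteq> ?y0" using y0n by auto
        then show ?thesis using False e by simp
      qed
    qed
    show ?thesis using iso_cong[OF i3 ws eq] e by simp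
  qed
  have PhiS2: "Phi e \<in> ?S2" if "e \<in> ?S1" for e
  proof -
    obtain a b where e: "e = (a, b)" by fastforce
    have ab: "(a, b) \<in> arrs \<sigma>" using that e by simp
    let ?G = "glue \<sigma> (a, b)"
    let ?K = "alab \<sigma> (a, b)"
    have g: "iso_by (gs e) ?G \<rho>" using gs[OF that] e by simp
    have aG: "a \<in> nodes ?G" using gl_ab[OF H Ps ab] by (simp add: glue_nodes)
    have v: "gs e a \<in> nodes \<rho>" using iso_node[OF g aG] .
    have K: "snd (lab \<sigma> a) \<inter> fst (lab \<sigma> b) = {?K}" using gl_K[OF H Ps ab] .
    have te: "the_elem (snd (lab \<sigma> a) \<inter> fst (lab \<sigma> b)) = ?K" using K by simp
    have lE: "lab \<sigma> a \<in> E" "lab \<sigma> b \<in> E" using gl_labE[OF H Ps ab] gl_ab[OF H Ps ab] by auto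
    have lp: "is_path E (len2 (lab \<sigma> a) (lab \<sigma> b))" using len2_path[OF lE K] .
    have lr: "lab \<rho> (gs e a) = mrg (lab \<sigma> a) (lab \<sigma> b) ?K"
      using iso_lab[OF g aG] by (simp add: glue_lab)
    have ps: "psrc (len2 (lab \<sigma> a) (lab \<sigma> b)) = fst (lab \<rho> (gs e a))"
      using lr te by (simp add: psrc_len2 mrg_def)
    have pt: "ptgt (len2 (lab \<sigma> a) (lab \<sigma> b)) = snd (lab \<rho> (gs e a))"
      using lr te by (simp add: ptgt_len2 mrg_def)
    have c: "iso_by (\<lambda>x. if x = snd e then ?yr else gs e x) \<sigma> (refine \<rho> (gs e a) (lab \<sigma> a) (lab \<sigma> b))"
      using chi[OF that] e by simp
    have rp: "is_path E (refine \<rho> (gs e a) (lab \<sigma> a) (lab \<sigma> b))" using iso_path[OF c Ps] .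
    have "cls \<sigma> = cls (refine \<rho> (gs e a) (lab \<sigma> a) (lab \<sigma> b))" using cls_of_iso[OF ws c] .
    then show ?thesis using v lp ps pt rp e
      by (simp add: Phi_def refine_terms_def)
  qed
  have inj: "inj_on Phi ?S1"
  proof (rule inj_onI)
    fix e e' assume e: "e \<in> ?S1" and e': "e' \<in> ?S1" and eq: "Phi e = Phi e'"
    obtain a b where ab: "e = (a, b)" by fastforce
    obtain a' b' where ab': "e' = (a', b')" by fastforce
    have eqs: "gs e a = gs e' a'" "lab \<sigma> a = lab \<sigma> a'" "lab \<sigma> b = lab \<sigma> b'"
      using eq ab ab' by (auto simp: Phi_def)
    have c1: "iso_by (\<lambda>x. if x = b then ?yr else gs e x) \<sigma> (refine \<rho> (gs e a) (lab \<sigma> a) (lab \<sigma> b))"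
      using chi[OF e] ab by simp
    have c2: "iso_by (\<lambda>x. if x = b' then ?yr else gs e' x) \<sigma> (refine \<rho> (gs e a) (lab \<sigma> a) (lab \<sigma> b))"
      using chi[OF e'] ab' eqs by simp
    have u: "\<forall>x\<in>nodes \<sigma>. (if x = b then ?yr else gs e x) = (if x = b' then ?yr else gs e' x)"
      using iso_unique[OF Ps c1 c2] .
    have inj2: "inj_on (\<lambda>x. if x = b' then ?yr else gs e' x) (nodes \<sigma>)" using iso_inj[OF c2] .
    have abn: "a \<in> nodes \<sigma>" "b \<in> nodes \<sigma>" "a \<noteq> b" using gl_ab[OF H Ps] e ab by auto
    have abn': "a' \<in> nodes \<sigma>" "b' \<in> nodes \<sigma>" "a' \<noteq> b'" using gl_ab[OF H Ps] e' ab' by auto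
    have ua: "(if a = b' then ?yr else gs e' a) = gs e a" using u abn by auto
    have ub: "(if b = b' then ?yr else gs e' b) = ?yr" using u abn by auto
    have gsa: "gs e a \<noteq> ?yr"
    proof -
      have "a \<in> nodes (glue \<sigma> e)" using abn ab by (simp add: glue_nodes)
      then have "gs e a \<in> nodes \<rho>" using iso_node[OF gs[OF e]] by blast
      then show ?thesis using yrn by auto
    qed
    have "(if a = b' then ?yr else gs e' a) = (if a' = b' then ?yr else gs e' a')"
      using ua eqs abn' by simp
    then have "(\<lambda>x. if x = b' then ?yr else gs e' x) a = (\<lambda>x. if x = b' then ?yr else gs e' x) a'" by simp
    then have "a = a'" using inj_onD[OF inj2] abn(1) abn'(1) by blast
    moreover have "b = b'"
    proof (rule ccontr)
      assume "b \<noteq> b'"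
      then have "gs e' b = ?yr" using ub by simp
      moreover have "b \<in> nodes (glue \<sigma> e')" using abn \<open>b \<noteq> b'\<close> ab' by (simp add: glue_nodes)
      then have "gs e' b \<in> nodes \<rho>" using iso_node[OF gs[OF e']] by blast
      ultimately show False using yrn by simp
    qed
    ultimately show "e = e'" using ab ab' by simp
  qed
  have surj: "?S2 \<subseteq> Phi ` ?S1"
  proof
    fix t assume t: "t \<in> ?S2"
    obtain v e1 e2 where tv: "t = (v, e1, e2)" by (cases t) auto
    let ?R = "refine \<rho> v e1 e2"
    have rt: "(v, e1, e2) \<in> refine_terms E \<rho>" using t tv by simp
    have v: "v \<in> nodes \<rho>" and RP: "is_path E ?R" using rt by (auto simp: refine_terms_def)
    have dR: "is_dtree ?R" using RP by (rule path_dtree)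
    have wR: "wft ?R" using dR by (rule dtree_wf)
    have "cls ?R = cls \<sigma>" using t tv by simp
    then obtain h where h: "iso_by h ?R \<sigma>" using iso_of_cls[OF wR] by blast
    have vy: "(v, ?yr) \<in> arrs ?R" by (simp add: refine_arrs)
    let ?e = "(h v, h ?yr)"
    have eA: "?e \<in> arrs \<sigma>" using iso_arr[OF h vy] .
    have i1: "iso_by h (glue ?R (v, ?yr)) (glue \<sigma> ?e)" using glue_iso[OF dR h vy] .
    have i0: "iso_by id \<rho> (glue ?R (v, ?yr))" using refine_glue[OF dr v rt_lab[OF rt]] .
    have i2: "iso_by (h \<circ> id) \<rho> (glue \<sigma> ?e)" using iso_trans[OF i0 i1] .
    have "cls \<rho> = cls (glue \<sigma> ?e)" using cls_of_iso[OF wr i2] .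
    then have eS1: "?e \<in> ?S1" using eA by simp
    have g: "iso_by (gs ?e) (glue \<sigma> ?e) \<rho>" using gs[OF eS1] .
    have k: "iso_by (gs ?e \<circ> (h \<circ> id)) \<rho> \<rho>" using iso_trans[OF i2 g] .
    have "gs ?e (h v) = v" using aut_id[OF Pr k] v by simp
    moreover have "lab \<sigma> (h v) = e1"
    proof -
      have "v \<in> nodes ?R" using v by (simp add: refine_nodes)
      then have "lab \<sigma> (h v) = lab ?R v" using iso_lab[OF h] by blast
      then show ?thesis using v yrn by (auto simp: refine_lab)
    qed
    moreover have "lab \<sigma> (h ?yr) = e2"
    proof -
      have "?yr \<in> nodes ?R" by (simp add: refine_nodes)
      then have "lab \<sigma> (h ?yr) = lab ?R ?yr" using iso_lab[OF h] by blast
      then show ?thesis by (simp add: refine_lab)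
    qed
    ultimately have "Phi ?e = t" using tv by (simp add: Phi_def)
    then show "t \<in> Phi ` ?S1" using eS1 by (intro rev_image_eqI[of ?e]) auto
  qed
  have "Phi ` ?S1 \<subseteq> ?S2" using PhiS2 by blast
  then have "?S2 = Phi ` ?S1" using surj by blast
  then show ?thesis using card_image[OF inj] by simp
qed


section \<open>Label identities\<close>

lemma mrg_assoc:
  assumes H: "is_higraph E" and E: "x \<in> E" "y \<in> E" "z \<in> E"
    and K: "snd x \<inter> fst y = {K}" and L: "snd y \<inter> fst z = {L}"
  shows "mrg (mrg x y K) z L = mrg x (mrg y z L) K"
proof -
  have h1: "fst x \<inter> (fst y - {K}) = {}" "(snd x - {K}) \<inter> snd y = {}" using hmerge[OF H E(1,2) K] by auto
  have h2: "fst y \<inter> (fst z - {L}) = {}" "(snd y - {L}) \<inter> snd z = {}" using hmerge[OF H E(2,3) L] by auto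
  have k1: "K \<notin> fst z - {L}" using h2(1) K by blast
  have l1: "L \<notin> snd x - {K}" using h1(2) L by blast
  have "fst x \<union> (fst y - {K}) \<union> (fst z - {L}) = fst x \<union> (fst y \<union> (fst z - {L}) - {K})"
    using k1 by blast
  moreover have "snd x - {K} \<union> snd y - {L} \<union> snd z = snd x - {K} \<union> (snd y - {L} \<union> snd z)"
    using l1 by blast
  ultimately show ?thesis by (simp add: mrg_def)
qed

lemma mrg_fork:
  assumes H: "is_higraph E" and E: "x \<in> E" "y \<in> E" "z \<in> E"
    and K: "snd x \<inter> fst y = {K}" and M: "snd x \<inter> fst z = {M}" and KM: "K \<noteq> M"
  shows "mrg (mrg x y K) z M = mrg (mrg x z M) y K"
proof -
  have h1: "(snd x - {K}) \<inter> snd y = {}" using hmerge[OF H E(1,2) K] by auto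
  have h2: "(snd x - {M}) \<inter> snd z = {}" using hmerge[OF H E(1,3) M] by auto
  have m1: "M \<notin> snd y" using h1 M KM by blast
  have k1: "K \<notin> snd z" using h2 K KM by blast
  have "fst x \<union> (fst y - {K}) \<union> (fst z - {M}) = fst x \<union> (fst z - {M}) \<union> (fst y - {K})" by blast
  moreover have "snd x - {K} \<union> snd y - {M} \<union> snd z = snd x - {M} \<union> snd z - {K} \<union> snd y"
    using m1 k1 by blast
  ultimately show ?thesis by (simp add: mrg_def)
qed

lemma mrg_join:
  assumes H: "is_higraph E" and E: "x \<in> E" "y \<in> E" "z \<in> E"
    and K: "snd x \<inter> fst y = {K}" and L: "snd z \<inter> fst y = {L}" and KL: "K \<noteq> L"
  shows "mrg z (mrg x y K) L = mrg x (mrg z y L) K"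
proof -
  have h1: "fst x \<inter> (fst y - {K}) = {}" using hmerge[OF H E(1,2) K] by auto
  have h2: "fst z \<inter> (fst y - {L}) = {}" using hmerge[OF H E(3,2) L] by auto
  have l1: "L \<notin> fst x" using h1 L KL by blast
  have k1: "K \<notin> fst z" using h2 K KL by blast
  have "fst z \<union> (fst x \<union> (fst y - {K}) - {L}) = fst x \<union> (fst z \<union> (fst y - {L}) - {K})"
    using l1 k1 by blast
  moreover have "snd z - {L} \<union> (snd x - {K} \<union> snd y) = snd x - {K} \<union> (snd z - {L} \<union> snd y)" by blast
  ultimately show ?thesis by (simp add: mrg_def)
qed

section \<open>Double gluing\<close>

definition rn :: "nat \<Rightarrow> nat \<Rightarrow> nat \<Rightarrow> nat" where
  "rn a b z = (if z = b then a else z)"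

lemma glue_arrs_rn: "arrs (glue T (a, b)) = (\<lambda>(x, y). (rn a b x, rn a b y)) ` (arrs T - {(a, b)})"
  unfolding glue_arrs rn_def ..

lemma iso_quot:
  assumes N1: "nodes G1 = s1 ` N" and N2: "nodes G2 = s2 ` N"
    and A1: "arrs G1 = (\<lambda>(x, y). (s1 x, s1 y)) ` A" and A2: "arrs G2 = (\<lambda>(x, y). (s2 x, s2 y)) ` A"
    and phi: "\<forall>x\<in>N. phi (s1 x) = s2 x" and inj: "inj_on phi (nodes G1)"
    and L: "\<forall>x\<in>N. lab G2 (s2 x) = lab G1 (s1 x)" and AN: "A \<subseteq> N \<times> N"
  shows "iso_by phi G1 G2"
proof -
  have "phi ` nodes G1 = nodes G2" unfolding N1 N2 image_image using phi by (auto simp: image_iff)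
  then have b: "bij_betw phi (nodes G1) (nodes G2)" using inj by (simp add: bij_betw_def)
  have "(\<lambda>(x, y). (phi x, phi y)) ` arrs G1 = (\<lambda>u. (phi (s1 (fst u)), phi (s1 (snd u)))) ` A"
    unfolding A1 image_image by (simp add: case_prod_beta)
  also have "\<dots> = (\<lambda>u. (s2 (fst u), s2 (snd u))) ` A"
    by (rule image_cong[OF refl]) (use phi AN in auto)
  also have "\<dots> = arrs G2" unfolding A2 by (simp add: case_prod_beta)
  finally have a: "arrs G2 = (\<lambda>(x, y). (phi x, phi y)) ` arrs G1" by simp
  have l: "\<forall>z\<in>nodes G1. lab G2 (phi z) = lab G1 z"
  proof
    fix z assume "z \<in> nodes G1"
    then obtain x where x: "x \<in> N" "z = s1 x" unfolding N1 by blast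
    then show "lab G2 (phi z) = lab G1 z" using phi L by simp
  qed
  show ?thesis using b a l by (simp add: iso_by_def)
qed

context
  fixes E :: "'v hedge set" and T :: "'v ptree" and a b c d :: nat
  assumes H: "is_higraph E" and P: "is_path E T" and e: "(a, b) \<in> arrs T"
    and e': "(c, d) \<in> arrs T" and ne: "(a, b) \<noteq> (c, d)"
begin

lemma dg_in: "(rn a b c, rn a b d) \<in> arrs (glue T (a, b))"
  using gl_arrI[OF H P e e' ne[symmetric]] by (simp add: rn_def)

lemma dg_nodes:
  "nodes (glue (glue T (a, b)) (rn a b c, rn a b d)) = (\<lambda>x. rn (rn a b c) (rn a b d) (rn a b x)) ` nodes T"
proof -
  have ab: "a \<in> nodes T" "a \<noteq> b" using gl_ab[OF H P e] by auto
  have cn: "c \<in> nodes T" using gl_arr_nodes[OF H P e e'] by auto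
  have cdA: "(c, d) \<in> arrs T - {(a, b)}" using e' ne by auto
  have nl: "rn a b c \<noteq> rn a b d" unfolding rn_def by (rule gl_ren_noloop[OF H P e cdA])
  show ?thesis
  proof
    show "nodes (glue (glue T (a, b)) (rn a b c, rn a b d)) \<subseteq> (\<lambda>x. rn (rn a b c) (rn a b d) (rn a b x)) ` nodes T"
    proof
      fix z assume "z \<in> nodes (glue (glue T (a, b)) (rn a b c, rn a b d))"
      then have z: "z \<in> nodes T" "z \<noteq> b" "z \<noteq> rn a b d" by (auto simp: glue_nodes)
      then have "rn (rn a b c) (rn a b d) (rn a b z) = z" by (simp add: rn_def)
      then show "z \<in> (\<lambda>x. rn (rn a b c) (rn a b d) (rn a b x)) ` nodes T"
        using z(1) by (intro rev_image_eqI[of z]) auto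
    qed
  next
    show "(\<lambda>x. rn (rn a b c) (rn a b d) (rn a b x)) ` nodes T \<subseteq> nodes (glue (glue T (a, b)) (rn a b c, rn a b d))"
    proof
      fix z assume "z \<in> (\<lambda>x. rn (rn a b c) (rn a b d) (rn a b x)) ` nodes T"
      then obtain x where x: "x \<in> nodes T" "z = rn (rn a b c) (rn a b d) (rn a b x)" by blast
      have rx: "rn a b x \<in> nodes T" "rn a b x \<noteq> b" using x ab by (auto simp: rn_def)
      have rc: "rn a b c \<in> nodes T" "rn a b c \<noteq> b" using cn ab by (auto simp: rn_def)
      show "z \<in> nodes (glue (glue T (a, b)) (rn a b c, rn a b d))"
        using x(2) rx rc nl by (auto simp: glue_nodes rn_def)
    qed
  qed
qed

lemma dg_arrs:
  "arrs (glue (glue T (a, b)) (rn a b c, rn a b d))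
     = (\<lambda>(x, y). (rn (rn a b c) (rn a b d) (rn a b x), rn (rn a b c) (rn a b d) (rn a b y))) ` (arrs T - {(a, b), (c, d)})"
proof -
  let ?r = "\<lambda>(x, y). (rn a b x, rn a b y)"
  let ?r2 = "\<lambda>(x, y). (rn (rn a b c) (rn a b d) x, rn (rn a b c) (rn a b d) y)"
  have inj: "inj_on ?r (arrs T - {(a, b)})" using gl_ren_inj[OF H P e] by (simp add: rn_def)
  have "arrs (glue T (a, b)) - {(rn a b c, rn a b d)} = ?r ` (arrs T - {(a, b)}) - ?r ` {(c, d)}"
    by (simp add: glue_arrs_rn)
  also have "\<dots> = ?r ` (arrs T - {(a, b)} - {(c, d)})"
    by (rule inj_on_image_set_diff[OF inj, symmetric]) (use e' ne in auto)
  finally have X: "arrs (glue T (a, b)) - {(rn a b c, rn a b d)} = ?r ` (arrs T - {(a, b), (c, d)})"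
    by (simp add: insert_commute Diff_insert2[symmetric])
  show ?thesis
    unfolding glue_arrs_rn[of "glue T (a, b)"] X image_image by (simp add: case_prod_beta)
qed

lemma dg_lab:
  "lab (glue (glue T (a, b)) (rn a b c, rn a b d)) z
     = (if z = rn a b c then mrg (lab (glue T (a, b)) (rn a b c)) (lab (glue T (a, b)) (rn a b d)) (alab T (c, d))
        else lab (glue T (a, b)) z)"
proof -
  have "alab (glue T (a, b)) (rn a b c, rn a b d) = alab T (c, d)"
    using gl_alab[OF H P e e' ne[symmetric]] by (simp add: rn_def)
  then show ?thesis by (simp add: glue_lab)
qed

end


lemma glue_comm:
  assumes H: "is_higraph E" and P: "is_path E T" and e: "(a, b) \<in> arrs T"
    and e': "(c, d) \<in> arrs T" and ne: "(a, b) \<noteq> (c, d)"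
  shows "ptree_iso (glue (glue T (a, b)) (rn a b c, rn a b d)) (glue (glue T (c, d)) (rn c d a, rn c d b))"
proof -
  let ?G1 = "glue (glue T (a, b)) (rn a b c, rn a b d)"
  let ?G2 = "glue (glue T (c, d)) (rn c d a, rn c d b)"
  let ?s1 = "\<lambda>x. rn (rn a b c) (rn a b d) (rn a b x)"
  let ?s2 = "\<lambda>x. rn (rn c d a) (rn c d b) (rn c d x)"
  let ?A = "arrs T - {(a, b), (c, d)}"
  have ne': "(c, d) \<noteq> (a, b)" using ne by auto
  have N1: "nodes ?G1 = ?s1 ` nodes T" using dg_nodes[OF H P e e' ne] .
  have N2: "nodes ?G2 = ?s2 ` nodes T" using dg_nodes[OF H P e' e ne'] .
  have A1: "arrs ?G1 = (\<lambda>(x, y). (?s1 x, ?s1 y)) ` ?A" using dg_arrs[OF H P e e' ne] .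
  have A2: "arrs ?G2 = (\<lambda>(x, y). (?s2 x, ?s2 y)) ` ?A" using dg_arrs[OF H P e' e ne'] by (simp add: insert_commute)
  have L1: "\<And>z. lab ?G1 z = (if z = rn a b c then mrg (lab (glue T (a, b)) (rn a b c)) (lab (glue T (a, b)) (rn a b d)) (alab T (c, d))
        else lab (glue T (a, b)) z)" using dg_lab[OF H P e e' ne] .
  have L2: "\<And>z. lab ?G2 z = (if z = rn c d a then mrg (lab (glue T (c, d)) (rn c d a)) (lab (glue T (c, d)) (rn c d b)) (alab T (a, b))
        else lab (glue T (c, d)) z)" using dg_lab[OF H P e' e ne'] .
  have AN: "?A \<subseteq> nodes T \<times> nodes T" using P by (auto simp: is_path_def is_dtree_def)
  have ab: "a \<in> nodes T" "b \<in> nodes T" "a \<noteq> b" using gl_ab[OF H P e] by auto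
  have cd: "c \<in> nodes T" "d \<in> nodes T" "c \<noteq> d" using gl_ab[OF H P e'] by auto
  have ba: "(b, a) \<noteq> (c, d)" using gl_ba[OF H P e] e' by auto
  have labE: "\<And>x. x \<in> nodes T \<Longrightarrow> lab T x \<in> E" using gl_labE[OF H P e] .
  have sK: "snd (lab T a) \<inter> fst (lab T b) = {alab T (a, b)}" using gl_sing[OF H P e e] .
  have sL: "snd (lab T c) \<inter> fst (lab T d) = {alab T (c, d)}" using gl_sing[OF H P e e'] .
  have gl1: "\<And>z. lab (glue T (a, b)) z = (if z = a then mrg (lab T a) (lab T b) (alab T (a, b)) else lab T z)"
    by (rule glue_lab)
  have gl2: "\<And>z. lab (glue T (c, d)) z = (if z = c then mrg (lab T c) (lab T d) (alab T (c, d)) else lab T z)"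
    by (rule glue_lab)
  consider (C1) "a \<noteq> c" "a \<noteq> d" "b \<noteq> c" "b \<noteq> d"
    | (C2) "b = c" | (C3) "a = d" | (C4) "a = c" | (C5) "b = d" by blast
  then show ?thesis
  proof cases
    case C1
    have s: "\<forall>x\<in>nodes T. id (?s1 x) = ?s2 x" using C1 by (auto simp: rn_def)
    have l: "\<forall>x\<in>nodes T. lab ?G2 (?s2 x) = lab ?G1 (?s1 x)"
      unfolding L1 L2 gl1 gl2 using C1 ab cd by (auto simp: rn_def)
    have "iso_by id ?G1 ?G2" by (rule iso_quot[OF N1 N2 A1 A2 s _ l AN]) simp
    then show ?thesis unfolding ptree_iso_iff by blast
  next
    case C2
    have ad: "a \<noteq> d" using C2 ba by auto
    have bd: "b \<noteq> d" using C2 cd by auto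
    have s: "\<forall>x\<in>nodes T. id (?s1 x) = ?s2 x" using C2 ad bd ab by (auto simp: rn_def)
    have m: "mrg (mrg (lab T a) (lab T b) (alab T (a, b))) (lab T d) (alab T (b, d))
           = mrg (lab T a) (mrg (lab T b) (lab T d) (alab T (b, d))) (alab T (a, b))"
      using mrg_assoc[OF H labE[OF ab(1)] labE[OF ab(2)] labE[OF cd(2)] sK] sL C2 by simp
    have l: "\<forall>x\<in>nodes T. lab ?G2 (?s2 x) = lab ?G1 (?s1 x)"
      unfolding L1 L2 gl1 gl2 using C2 ad bd ab cd m by (auto simp: rn_def)
    have "iso_by id ?G1 ?G2" by (rule iso_quot[OF N1 N2 A1 A2 s _ l AN]) simp
    then show ?thesis unfolding ptree_iso_iff by blast
  next
    case C3
    have bc: "b \<noteq> c" using C3 ba by auto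
    have bd: "b \<noteq> d" using C3 ab by auto
    have s: "\<forall>x\<in>nodes T. id (?s1 x) = ?s2 x" using C3 bc bd cd by (auto simp: rn_def)
    have m: "mrg (mrg (lab T c) (lab T a) (alab T (c, a))) (lab T b) (alab T (a, b))
           = mrg (lab T c) (mrg (lab T a) (lab T b) (alab T (a, b))) (alab T (c, a))"
      using mrg_assoc[OF H labE[OF cd(1)] labE[OF ab(1)] labE[OF ab(2)] _ sK] sL C3 by simp
    have l: "\<forall>x\<in>nodes T. lab ?G2 (?s2 x) = lab ?G1 (?s1 x)"
      unfolding L1 L2 gl1 gl2 using C3 bc bd ab cd m by (auto simp: rn_def)
    have "iso_by id ?G1 ?G2" by (rule iso_quot[OF N1 N2 A1 A2 s _ l AN]) simp
    then show ?thesis unfolding ptree_iso_iff by blast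
  next
    case C4
    have bd: "b \<noteq> d" using C4 ne by auto
    have KM: "alab T (a, b) \<noteq> alab T (a, d)" using gl_dist_out[OF H P e e] e' C4 bd by simp
    have s: "\<forall>x\<in>nodes T. id (?s1 x) = ?s2 x" using C4 bd ab cd by (auto simp: rn_def)
    have m: "mrg (mrg (lab T a) (lab T b) (alab T (a, b))) (lab T d) (alab T (a, d))
           = mrg (mrg (lab T a) (lab T d) (alab T (a, d))) (lab T b) (alab T (a, b))"
      using mrg_fork[OF H labE[OF ab(1)] labE[OF ab(2)] labE[OF cd(2)] sK _ KM] sL C4 by simp
    have l: "\<forall>x\<in>nodes T. lab ?G2 (?s2 x) = lab ?G1 (?s1 x)"
      unfolding L1 L2 gl1 gl2 using C4 bd ab cd m by (auto simp: rn_def)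
    have "iso_by id ?G1 ?G2" by (rule iso_quot[OF N1 N2 A1 A2 s _ l AN]) simp
    then show ?thesis unfolding ptree_iso_iff by blast
  next
    case C5
    have ac: "a \<noteq> c" using C5 ne by auto
    have KL: "alab T (a, b) \<noteq> alab T (c, b)" using gl_dist_in[OF H P e e] e' C5 ac by simp
    let ?phi = "\<lambda>z. if z = c then a else z"
    have s: "\<forall>x\<in>nodes T. ?phi (?s1 x) = ?s2 x" using C5 ac ab cd by (auto simp: rn_def)
    have aN: "a \<notin> nodes ?G1" using C5 by (simp add: glue_nodes rn_def)
    have inj: "inj_on ?phi (nodes ?G1)" using aN by (auto simp: inj_on_def)
    have m: "mrg (lab T c) (mrg (lab T a) (lab T b) (alab T (a, b))) (alab T (c, b))
           = mrg (lab T a) (mrg (lab T c) (lab T b) (alab T (c, b))) (alab T (a, b))"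
      using mrg_join[OF H labE[OF ab(1)] labE[OF ab(2)] labE[OF cd(1)] sK _ KL] sL C5 by simp
    have l: "\<forall>x\<in>nodes T. lab ?G2 (?s2 x) = lab ?G1 (?s1 x)"
      unfolding L1 L2 gl1 gl2 using C5 ac ab cd m by (auto simp: rn_def)
    have "iso_by ?phi ?G1 ?G2" by (rule iso_quot[OF N1 N2 A1 A2 s inj l AN])
    then show ?thesis unfolding ptree_iso_iff by blast
  qed
qed


lemma even_invol:
  assumes "finite S" "\<forall>x\<in>S. f x \<in> S" "\<forall>x\<in>S. f (f x) = x" "\<forall>x\<in>S. f x \<noteq> x"
  shows "even (card S)"
  using assms
proof (induction "card S" arbitrary: S rule: less_induct)
  case less
  show ?case
  proof (cases "S = {}")
    case True then show ?thesis by simp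
  next
    case False
    then obtain x where x: "x \<in> S" by blast
    let ?S' = "S - {x, f x}"
    have fx: "f x \<in> S" "f x \<noteq> x" using less.prems x by auto
    have cS: "card S = card ?S' + 2"
    proof -
      have "{x, f x} \<subseteq> S" using x fx by auto
      moreover have "card {x, f x} = 2" using fx(2) by simp
      ultimately show ?thesis using less.prems(1) card_Diff_subset[of "{x, f x}" S] card_mono[of S "{x, f x}"]
        by simp
    qed
    have "even (card ?S')"
    proof (rule less.hyps)
      show "card ?S' < card S" using cS by simp
      show "finite ?S'" using less.prems(1) by simp
      show "\<forall>y\<in>?S'. f y \<in> ?S'"
      proof
        fix y assume y: "y \<in> ?S'"
        have "f y \<in> S" using y less.prems(2) by blast
        moreover have "f y \<noteq> x"
        proof
          assume "f y = x"
          then have "f x = y" using y less.prems(3) by force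
          then show False using y by simp
        qed
        moreover have "f y \<noteq> f x"
        proof
          assume "f y = f x"
          then have "f (f y) = f (f x)" by simp
          then have "y = x" using y x less.prems(3) by simp
          then show False using y by simp
        qed
        ultimately show "f y \<in> ?S'" by simp
      qed
      show "\<forall>y\<in>?S'. f (f y) = y" using less.prems(3) by simp
      show "\<forall>y\<in>?S'. f y \<noteq> y" using less.prems(4) by simp
    qed
    then show ?thesis using cS by simp
  qed
qed

lemma bdry2_even:
  assumes H: "is_higraph E" and P: "is_path E T"
  shows "even (\<Sum>e\<in>arrs T. card {u\<in>arrs (glue T e). cls (glue (glue T e) u) = C})"
proof -
  have d: "is_dtree T" using P by (rule path_dtree)
  have fN: "finite (nodes T)" using d by (simp add: is_dtree_def)
  have fA: "finite (arrs T)" using wft_finite[OF dtree_wf[OF d] fN] .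
  have fAG: "finite (arrs (glue T e))" for e
    by (simp add: glue_arrs_rn[of T "fst e" "snd e", simplified] fA)
  let ?Q = "SIGMA e:arrs T. {u\<in>arrs (glue T e). cls (glue (glue T e) u) = C}"
  have sQ: "(\<Sum>e\<in>arrs T. card {u\<in>arrs (glue T e). cls (glue (glue T e) u) = C}) = card ?Q"
    using fA fAG by (simp add: card_SigmaI)
  let ?psi = "\<lambda>(e, e'). (e, (rn (fst e) (snd e) (fst e'), rn (fst e) (snd e) (snd e')))"
  let ?P = "{(e, e'). e \<in> arrs T \<and> e' \<in> arrs T \<and> e' \<noteq> e \<and>
              cls (glue (glue T e) (rn (fst e) (snd e) (fst e'), rn (fst e) (snd e) (snd e'))) = C}"
  have inj: "inj_on ?psi ?P"
  proof (rule inj_onI)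
    fix p q assume p: "p \<in> ?P" and q: "q \<in> ?P" and eq: "?psi p = ?psi q"
    obtain e e' where pe: "p = (e, e')" by (cases p) blast
    obtain f f' where qf: "q = (f, f')" by (cases q) blast
    have ef: "e = f" using eq pe qf by simp
    obtain a b where ab: "e = (a, b)" by fastforce
    have eA: "(a, b) \<in> arrs T" using p pe ab by simp
    have i: "inj_on (\<lambda>(x, y). (rn a b x, rn a b y)) (arrs T - {(a, b)})"
      using gl_ren_inj[OF H P eA] by (simp add: rn_def)
    have "e' \<in> arrs T - {(a, b)}" "f' \<in> arrs T - {(a, b)}" using p q pe qf ab ef by auto
    moreover have "(\<lambda>(x, y). (rn a b x, rn a b y)) e' = (\<lambda>(x, y). (rn a b x, rn a b y)) f'"
    proof -
      have eq2: "?psi (e, e') = ?psi (e, f')" using eq pe qf ef by simp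
      then show ?thesis unfolding ab by (simp add: case_prod_beta)
    qed
    ultimately have "e' = f'" using inj_onD[OF i] by blast
    then show "p = q" using pe qf ef by simp
  qed
  have img: "?psi ` ?P = ?Q"
  proof
    show "?psi ` ?P \<subseteq> ?Q"
    proof
      fix q assume "q \<in> ?psi ` ?P"
      then obtain e e' where p: "(e, e') \<in> ?P" "q = ?psi (e, e')" by blast
      obtain a b where ab: "e = (a, b)" by fastforce
      obtain c d where cd: "e' = (c, d)" by fastforce
      have "(rn a b c, rn a b d) \<in> arrs (glue T (a, b))"
        using dg_in[of E T a b c d] H P p ab cd by auto
      then show "q \<in> ?Q" using p ab cd by auto
    qed
  next
    show "?Q \<subseteq> ?psi ` ?P"
    proof
      fix q assume q: "q \<in> ?Q"
      obtain e u where eu: "q = (e, u)" by (cases q) blast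
      obtain a b where ab: "e = (a, b)" by fastforce
      have eA: "(a, b) \<in> arrs T" and uA: "u \<in> arrs (glue T (a, b))"
        and cl: "cls (glue (glue T (a, b)) u) = C" using q eu ab by auto
      obtain c d where cd: "(c, d) \<in> arrs T - {(a, b)}" "u = (rn a b c, rn a b d)"
        using uA unfolding glue_arrs_rn by auto
      have c1: "(c, d) \<in> arrs T" "(c, d) \<noteq> (a, b)" using cd(1) by auto
      have c2: "cls (glue (glue T (a, b)) (rn a b c, rn a b d)) = C" using cl cd(2) by simp
      have m1: "((a, b), (c, d)) \<in> ?P" using eA c1 c2 by simp
      have m2: "?psi ((a, b), (c, d)) = q" using eu ab cd by simp
      show "q \<in> ?psi ` ?P" using rev_image_eqI[where f="?psi", OF m1 m2[symmetric]] .
    qed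
  qed
  have cPQ: "card ?Q = card ?P" using card_image[OF inj] img by simp
  have fP: "finite ?P"
    by (rule finite_subset[of _ "arrs T \<times> arrs T"]) (use fA in auto)
  let ?sw = "\<lambda>(e, e'). (e', e)"
  have swP: "\<forall>p\<in>?P. ?sw p \<in> ?P"
  proof
    fix p assume p: "p \<in> ?P"
    obtain a b c d where pe: "p = ((a, b), (c, d))" by (metis prod.collapse)
    have e: "(a, b) \<in> arrs T" and e': "(c, d) \<in> arrs T" and ne: "(a, b) \<noteq> (c, d)"
      and cl: "cls (glue (glue T (a, b)) (rn a b c, rn a b d)) = C" using p pe by auto
    have iso: "ptree_iso (glue (glue T (a, b)) (rn a b c, rn a b d)) (glue (glue T (c, d)) (rn c d a, rn c d b))"
      using glue_comm[OF H P e e' ne] .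
    have GP: "is_path E (glue T (a, b))" using gl_path[OF H P e] .
    have GGP: "is_path E (glue (glue T (a, b)) (rn a b c, rn a b d))"
      using gl_path[OF H GP dg_in[OF H P e e' ne]] .
    have w: "wft (glue (glue T (a, b)) (rn a b c, rn a b d))" using dtree_wf[OF path_dtree[OF GGP]] .
    have "cls (glue (glue T (a, b)) (rn a b c, rn a b d)) = cls (glue (glue T (c, d)) (rn c d a, rn c d b))"
      using cls_eq_iff[OF w] iso by blast
    then have "cls (glue (glue T (c, d)) (rn c d a, rn c d b)) = C" using cl by simp
    then show "?sw p \<in> ?P" using pe e e' ne by auto
  qed
  have "even (card ?P)"
    by (rule even_invol[OF fP swP]) auto
  then show ?thesis using sQ cPQ by simp
qed


lemma paths_rep:
  assumes "D \<in> paths E"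
  shows "is_path E (rep D) \<and> cls (rep D) = D"
proof -
  obtain T0 where T0: "D = cls T0" "is_path E T0" using assms by (auto simp: paths_def)
  have i: "ptree_iso T0 (rep (cls T0))" by (rule rep_cls)
  have w: "wft T0" using T0(2) by (simp add: is_path_def dtree_wf)
  have "cls T0 = cls (rep (cls T0))" using cls_eq_iff[OF w] i by blast
  then show ?thesis using T0 ptree_iso_path[OF i T0(2)] by simp
qed

lemma cls_path_in: "is_path E T \<Longrightarrow> cls T \<in> paths E"
  by (auto simp: paths_def)

lemma bt_paths:
  assumes H: "is_higraph E" and P: "is_path E T"
  shows "bdry_tree T \<subseteq> paths E"
proof
  fix C assume "C \<in> bdry_tree T"
  then have "C \<in> cls ` glue T ` arrs T" using f2sum_sub unfolding bdry_tree_def by blast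
  then obtain e where e: "e \<in> arrs T" "C = cls (glue T e)" by blast
  obtain a b where ab: "e = (a, b)" by (cases e) blast
  have "is_path E (glue T (a, b))" using gl_path[OF H P] e ab by simp
  then show "C \<in> paths E" using e ab cls_path_in by simp
qed

lemma bt_fin:
  assumes "is_dtree T"
  shows "finite (bdry_tree T)"
proof -
  have "finite (arrs T)" using wft_finite[OF dtree_wf[OF assms]] assms by (simp add: is_dtree_def)
  then show ?thesis unfolding bdry_tree_def by (rule f2sum_finite)
qed

lemma dt_paths: "delta_tree E T \<subseteq> paths E"
proof
  fix C assume "C \<in> delta_tree E T"
  then have "C \<in> cls ` (\<lambda>(v, e1, e2). refine T v e1 e2) ` refine_terms E T"
    using f2sum_sub unfolding delta_tree_def by blast
  then obtain t where t: "t \<in> refine_terms E T" "C = cls ((\<lambda>(v, e1, e2). refine T v e1 e2) t)" by blast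
  obtain v e1 e2 where tv: "t = (v, e1, e2)" by (cases t) blast
  have "is_path E (refine T v e1 e2)" using t tv by (simp add: refine_terms_def)
  then show "C \<in> paths E" using t tv cls_path_in by simp
qed

lemma dt_fin:
  assumes "finite E" "is_dtree T"
  shows "finite (delta_tree E T)"
proof -
  have "refine_terms E T \<subseteq> nodes T \<times> E \<times> E"
    by (auto simp: refine_terms_def is_path_def len2_def)
  moreover have "finite (nodes T \<times> E \<times> E)" using assms by (simp add: is_dtree_def)
  ultimately have "finite (refine_terms E T)" by (rule finite_subset)
  then show ?thesis unfolding delta_tree_def by (rule f2sum_finite)
qed

lemma duality_basis:
  assumes H: "is_higraph E" and D: "D \<in> paths E" and C: "C \<in> paths E"
  shows "C \<in> bdry_tree (rep D) \<longleftrightarrow> D \<in> delta_tree E (rep C)"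
proof -
  have s: "is_path E (rep D)" "cls (rep D) = D" using paths_rep[OF D] by auto
  have r: "is_path E (rep C)" "cls (rep C) = C" using paths_rep[OF C] by auto
  have "card {e\<in>arrs (rep D). cls (glue (rep D) e) = cls (rep C)}
       = card {t\<in>refine_terms E (rep C). cls ((\<lambda>(v, e1, e2). refine (rep C) v e1 e2) t) = cls (rep D)}"
    using duality_count[OF H s(1) r(1)] .
  then show ?thesis using s(2) r(2) by (simp add: bdry_tree_def delta_tree_def f2sum_mem)
qed

lemma bdry_tree_glue_rep:
  assumes H: "is_higraph E" and P: "is_path E T" and e: "e \<in> arrs T"
  shows "bdry_tree (rep (cls (glue T e))) = bdry_tree (glue T e)"
proof -
  obtain a b where ab: "e = (a, b)" by (cases e) blast
  have d: "is_dtree (glue T e)" using gl_dtree'[OF H P] e ab by simp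
  obtain f where "iso_by f (glue T e) (rep (cls (glue T e)))"
    using rep_cls[of "glue T e"] unfolding ptree_iso_iff by blast
  then show ?thesis using bdry_tree_iso[OF d] by blast
qed

lemma bdry_bdry_tree_even:
  assumes H: "is_higraph E" and P: "is_path E T"
  shows "even (card {B\<in>bdry_tree T. C \<in> bdry_tree (rep B)})"
proof -
  have d: "is_dtree T" using P by (rule path_dtree)
  have fA: "finite (arrs T)" using wft_finite[OF dtree_wf[OF d]] d by (simp add: is_dtree_def)
  let ?h = "\<lambda>e. card {u\<in>arrs (glue T e). cls (glue (glue T e) u) = C}"
  have "odd (card {B\<in>bdry_tree T. C \<in> bdry_tree (rep B)})
     \<longleftrightarrow> odd (card {e\<in>arrs T. C \<in> bdry_tree (rep (cls (glue T e)))})"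
    unfolding bdry_tree_def[of T]
    using f2sum_count[OF fA, where g="glue T" and P="\<lambda>B. C \<in> bdry_tree (rep B)"] by simp
  also have "{e\<in>arrs T. C \<in> bdry_tree (rep (cls (glue T e)))} = {e\<in>arrs T. odd (?h e)}"
  proof -
    have "\<And>e. e \<in> arrs T \<Longrightarrow> C \<in> bdry_tree (rep (cls (glue T e))) \<longleftrightarrow> odd (?h e)"
      using bdry_tree_glue_rep[OF H P] by (simp add: bdry_tree_def[of "glue T _"] f2sum_mem)
    then show ?thesis by blast
  qed
  also have "odd (card {e\<in>arrs T. odd (?h e)}) \<longleftrightarrow> odd (\<Sum>e\<in>arrs T. ?h e)"
    using odd_sum_card[OF fA] by simp
  finally show ?thesis using bdry2_even[OF H P] by simp
qed

theorem proposition2p15: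
  fixes E :: "('v::finite) hedge set"
  assumes "is_higraph E"
  shows "(\<forall>a\<in>pathDGA E. \<forall>b\<in>pathDGA E. pairing (bdry a) b = pairing a (delta E b))
       \<and> (\<forall>a\<in>pathDGA E. bdry (bdry a) = {})
       \<and> (\<forall>a\<in>pathDGA E. delta E (delta E a) = {})"
proof -
  have H: "is_higraph E" by (rule assms)
  have fE: "finite E" by (rule finite_subset[OF subset_UNIV]) simp
  let ?F = "\<lambda>C. bdry_tree (rep C)"
  let ?G = "\<lambda>C. delta_tree E (rep C)"
  have bd: "\<And>a. bdry a = lin ?F a" by (simp add: bdry_def)
  have de: "\<And>a. delta E a = lin ?G a" by (simp add: delta_def)
  have finF: "\<And>D. D \<in> paths E \<Longrightarrow> finite (?F D)"
    using paths_rep bt_fin path_dtree by blast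
  have finG: "\<And>D. D \<in> paths E \<Longrightarrow> finite (?G D)"
    using paths_rep dt_fin[OF fE] path_dtree by blast
  have pF: "\<And>D. D \<in> paths E \<Longrightarrow> ?F D \<subseteq> paths E"
    using paths_rep bt_paths[OF H] by blast
  have pG: "\<And>D. ?G D \<subseteq> paths E" using dt_paths by blast
  have dga: "\<And>a. a \<in> pathDGA E \<longleftrightarrow> finite a \<and> a \<subseteq> paths E" by (simp add: pathDGA_def)
  have P1: "pairing (bdry a) b = pairing a (delta E b)" if a: "a \<in> pathDGA E" and b: "b \<in> pathDGA E" for a b
  proof -
    have fa: "finite a" "a \<subseteq> paths E" and fb: "finite b" "b \<subseteq> paths E" using a b dga by auto
    have fFa: "\<And>D. D \<in> a \<Longrightarrow> finite (?F D)" using finF fa by blast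
    have fGb: "\<And>D. D \<in> b \<Longrightarrow> finite (?G D)" using finG fb by blast
    have "pairing (bdry a) b \<longleftrightarrow> odd (card {C\<in>lin ?F a. C \<in> b})"
      unfolding pairing_def bd by (simp add: Int_def)
    also have "\<dots> \<longleftrightarrow> odd (\<Sum>D\<in>a. card {C\<in>?F D. C \<in> b})" using lin_count[OF fa(1) fFa] .
    also have "(\<Sum>D\<in>a. card {C\<in>?F D. C \<in> b}) = (\<Sum>D\<in>a. card {C\<in>b. C \<in> ?F D})"
      by (rule sum.cong) (auto intro: arg_cong[where f=card])
    also have "\<dots> = (\<Sum>C\<in>b. card {D\<in>a. C \<in> ?F D})" using sum_card_swap[OF fa(1) fb(1)] .
    also have "\<dots> = (\<Sum>C\<in>b. card {D\<in>?G C. D \<in> a})"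
    proof (rule sum.cong[OF refl])
      fix C assume C: "C \<in> b"
      have "{D\<in>a. C \<in> ?F D} = {D\<in>?G C. D \<in> a}"
        using duality_basis[OF H] C fa fb by blast
      then show "card {D\<in>a. C \<in> ?F D} = card {D\<in>?G C. D \<in> a}" by simp
    qed
    also have "odd \<dots> \<longleftrightarrow> odd (card {D\<in>lin ?G b. D \<in> a})" using lin_count[OF fb(1) fGb] by simp
    also have "\<dots> \<longleftrightarrow> pairing a (delta E b)"
      unfolding pairing_def de by (simp add: Int_def conj_commute)
    finally show ?thesis .
  qed
  have P2: "bdry (bdry a) = {}" if a: "a \<in> pathDGA E" for a
  proof -
    have fa: "finite a" "a \<subseteq> paths E" using a dga by auto
    have fFa: "\<And>D. D \<in> a \<Longrightarrow> finite (?F D)" using finF fa by blast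
    have "C \<notin> lin ?F (lin ?F a)" for C
    proof -
      have "C \<in> lin ?F (lin ?F a) \<longleftrightarrow> odd (card {B\<in>lin ?F a. C \<in> ?F B})" by (rule lin_mem)
      also have "\<dots> \<longleftrightarrow> odd (\<Sum>D\<in>a. card {B\<in>?F D. C \<in> ?F B})" using lin_count[OF fa(1) fFa] .
      also have "even (\<Sum>D\<in>a. card {B\<in>?F D. C \<in> ?F B})"
      proof (rule dvd_sum)
        fix D assume D: "D \<in> a"
        then have "is_path E (rep D)" using paths_rep fa by blast
        then show "2 dvd card {B\<in>?F D. C \<in> ?F B}" using bdry_bdry_tree_even[OF H] by blast
      qed
      ultimately show ?thesis by simp
    qed
    then show ?thesis unfolding bd by blast
  qed
  have binF: "bdry {C} = ?F C" for C
  proof (rule set_eqI)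
    fix X
    have eq: "{D \<in> {C}. X \<in> ?F D} = (if X \<in> ?F C then {C} else {})" by auto
    show "X \<in> bdry {C} \<longleftrightarrow> X \<in> ?F C" unfolding bd lin_mem eq by simp
  qed
  have P3: "delta E (delta E a) = {}" if a: "a \<in> pathDGA E" for a
  proof (rule ccontr)
    assume "delta E (delta E a) \<noteq> {}"
    then obtain C where C: "C \<in> delta E (delta E a)" by blast
    have fa: "finite a" "a \<subseteq> paths E" using a dga by auto
    have fGa: "\<And>D. D \<in> a \<Longrightarrow> finite (?G D)" using finG fa by blast
    have da: "delta E a \<in> pathDGA E"
    proof -
      have sub: "delta E a \<subseteq> (\<Union>D\<in>a. ?G D)" unfolding de by (rule lin_sub)
      have "(\<Union>D\<in>a. ?G D) \<subseteq> paths E" using pG by blast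
      then have "delta E a \<subseteq> paths E" using sub by blast
      moreover have "finite (delta E a)" using sub fa fGa by (meson finite_UN_I finite_subset)
      ultimately show ?thesis using dga by simp
    qed
    have fda: "finite (delta E a)" "delta E a \<subseteq> paths E" using da dga by auto
    have fGda: "\<And>D. D \<in> delta E a \<Longrightarrow> finite (?G D)" using finG fda by blast
    have "delta E (delta E a) \<subseteq> (\<Union>D\<in>delta E a. ?G D)" unfolding de by (rule lin_sub)
    then have Cp: "C \<in> paths E" using C pG by blast
    have c: "{C} \<in> pathDGA E" using Cp dga by simp
    have bc: "bdry {C} \<in> pathDGA E" unfolding binF[of C] dga using finF[OF Cp] pF[OF Cp] by simp
    have "pairing {C} (delta E (delta E a))" using C by (simp add: pairing_def)
    also have "pairing {C} (delta E (delta E a)) = pairing (bdry {C}) (delta E a)"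
      using P1[OF c da] by simp
    also have "\<dots> = pairing (bdry (bdry {C})) a" using P1[OF bc a] by simp
    also have "bdry (bdry {C}) = {}" using P2[OF c] .
    finally show False by (simp add: pairing_def)
  qed
  show ?thesis using P1 P2 P3 by blast
qed


end
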